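(* Let $F$ be an infinite field, $G$ a group with identity $e$, and $(g_1,\dots,g_n)\in G^n$ with pairwise distinct entries. Give $A=M_n(F)$ the elementary $G$-grading induced by $(g_1,\dots,g_n)$, and let $B$ be a subalgebra of $M_n(F)$ spanned by a set of matrix units, with the induced $G$-grading $B_g=B\cap A_g$. Let $G_0=\{g\in G: B_g\neq 0\}$. Then the $T_G$-ideal $T_G(B)$ of graded polynomial identities of $B$ is generated by the following polynomials: (i) $x_{e}^{(1)}x_{e}^{(2)}-x_{e}^{(2)}x_{e}^{(1)}$, if $e\in G_0$; (ii) $x_{g}^{(1)}x_{g^{-1}}^{(2)}x_{g}^{(3)}-x_{g}^{(3)}x_{g^{-1}}^{(2)}x_{g}^{(1)}$, for every $g\neq e$ with $B_g\neq 0$; (iii) $x_{g}^{(1)}$, for every $g$ with $B_g=0$; together with a finite number of monomial graded identities of $B$ of the form $x_{h_1}^{(1)}x_{h_2}^{(2)}\cdots x_{h_p}^{(p)}$ with $h_1,\dots,h_p\in G$ and $2\le p\le 2n-1$.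
   Context: The elementary grading on $A=M_n(F)$ induced by $(g_1,\dots,g_n)$: $A_g$ is the span of the matrix units $e_{ij}$ with $g_i^{-1}g_j=g$. $F\langle X|G\rangle$ is the free associative algebra on $X=\bigcup_{g\in G}X_g$, $X_g=\{x_g^{(1)},x_g^{(2)},\dots\}$ disjoint countable sets, the variable $x_g^{(i)}$ having degree $g$. A polynomial $f(x_{g_1}^{(1)},\dots,x_{g_k}^{(k)})$ is a graded identity of $B$ if $f(b_1,\dots,b_k)=0$ for all $b_j\in B_{g_j}$; $T_G(B)$ is the set of all graded identities, which is a $T_G$-ideal (an ideal invariant under all degree-preserving endomorphisms of $F\langle X|G\rangle$). A set $S$ generates (is a basis of) $T_G(B)$ if $T_G(B)$ is the smallest $T_G$-ideal containing $S$. *)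

theory Defs
  imports "HOL-Algebra.Group"
begin

type_synonym ('f, 'n) sqmat = "'n \<Rightarrow> 'n \<Rightarrow> 'f"

definition mzero :: "('f::field, 'n) sqmat" where
  "mzero = (\<lambda>i j. 0)"

definition mid :: "('f::field, 'n) sqmat" where
  "mid = (\<lambda>i j. if i = j then 1 else 0)"

definition mmul :: "('f::field, 'n::finite) sqmat \<Rightarrow> ('f, 'n) sqmat \<Rightarrow> ('f, 'n) sqmat" where
  "mmul X Y = (\<lambda>i j. \<Sum>k\<in>UNIV. X i k * Y k j)"

fun mprod :: "('f::field, 'n::finite) sqmat list \<Rightarrow> ('f, 'n) sqmat" where
  "mprod [] = mid"
| "mprod (X # Xs) = mmul X (mprod Xs)"

definition elem_comp :: "('g, 'b) monoid_scheme \<Rightarrow> ('n \<Rightarrow> 'g) \<Rightarrow> 'g \<Rightarrow> ('f::field, 'n) sqmat set" where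
  "elem_comp G gs h = {X. \<forall>i j. X i j \<noteq> 0 \<longrightarrow> inv\<^bsub>G\<^esub> (gs i) \<otimes>\<^bsub>G\<^esub> gs j = h}"

definition unit_span :: "('n \<times> 'n) set \<Rightarrow> ('f::field, 'n) sqmat set" where
  "unit_span S = {X. \<forall>i j. X i j \<noteq> 0 \<longrightarrow> (i, j) \<in> S}"

definition is_subalgebra :: "('f::field, 'n::finite) sqmat set \<Rightarrow> bool" where
  "is_subalgebra B \<longleftrightarrow> mzero \<in> B \<and>
     (\<forall>X\<in>B. \<forall>Y\<in>B. (\<lambda>i j. X i j + Y i j) \<in> B) \<and>
     (\<forall>c. \<forall>X\<in>B. (\<lambda>i j. c * X i j) \<in> B) \<and>
     (\<forall>X\<in>B. \<forall>Y\<in>B. mmul X Y \<in> B)"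

text \<open>The variable x_h^(i) is the pair (h, i); a polynomial is a finitely supported
  function from words (lists of variables) to F, vanishing on the empty word,
  all of whose variables have degrees in the carrier of G.\<close>

type_synonym ('g, 'f) gpoly = "('g \<times> nat) list \<Rightarrow> 'f"

definition supp :: "('g, 'f::field) gpoly \<Rightarrow> ('g \<times> nat) list set" where
  "supp p = {w. p w \<noteq> 0}"

definition is_gpoly :: "('g, 'b) monoid_scheme \<Rightarrow> ('g, 'f::field) gpoly \<Rightarrow> bool" where
  "is_gpoly G p \<longleftrightarrow> finite (supp p) \<and> p [] = 0 \<and>
     (\<forall>w\<in>supp p. \<forall>v\<in>set w. fst v \<in> carrier G)"

definition pzero :: "('g, 'f::field) gpoly" where
  "pzero = (\<lambda>w. 0)"

definition padd :: "('g, 'f::field) gpoly \<Rightarrow> ('g, 'f) gpoly \<Rightarrow> ('g, 'f) gpoly" where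
  "padd p q = (\<lambda>w. p w + q w)"

definition psub :: "('g, 'f::field) gpoly \<Rightarrow> ('g, 'f) gpoly \<Rightarrow> ('g, 'f) gpoly" where
  "psub p q = (\<lambda>w. p w - q w)"

definition psmult :: "'f::field \<Rightarrow> ('g, 'f) gpoly \<Rightarrow> ('g, 'f) gpoly" where
  "psmult c p = (\<lambda>w. c * p w)"

definition pmul :: "('g, 'f::field) gpoly \<Rightarrow> ('g, 'f) gpoly \<Rightarrow> ('g, 'f) gpoly" where
  "pmul p q = (\<lambda>w. \<Sum>k\<in>{..length w}. p (take k w) * q (drop k w))"

definition mon :: "('g \<times> nat) list \<Rightarrow> ('g, 'f::field) gpoly" where
  "mon w = (\<lambda>u. if u = w then 1 else 0)"

fun pprod :: "('g, 'f::field) gpoly list \<Rightarrow> ('g, 'f) gpoly" where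
  "pprod [] = mon []"
| "pprod (p # ps) = pmul p (pprod ps)"

definition wdeg :: "('g, 'b) monoid_scheme \<Rightarrow> ('g \<times> nat) list \<Rightarrow> 'g" where
  "wdeg G w = foldr (\<lambda>v acc. fst v \<otimes>\<^bsub>G\<^esub> acc) w \<one>\<^bsub>G\<^esub>"

definition homogeneous :: "('g, 'b) monoid_scheme \<Rightarrow> 'g \<Rightarrow> ('g, 'f::field) gpoly \<Rightarrow> bool" where
  "homogeneous G h p \<longleftrightarrow> (\<forall>w\<in>supp p. wdeg G w = h)"

definition psubst :: "('g \<times> nat \<Rightarrow> ('g, 'f::field) gpoly) \<Rightarrow> ('g, 'f) gpoly \<Rightarrow> ('g, 'f) gpoly" where
  "psubst \<tau> p = (\<lambda>u. \<Sum>w\<in>supp p. p w * pprod (map \<tau> w) u)"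

definition graded_subst :: "('g, 'b) monoid_scheme \<Rightarrow> ('g \<times> nat \<Rightarrow> ('g, 'f::field) gpoly) \<Rightarrow> bool" where
  "graded_subst G \<tau> \<longleftrightarrow> (\<forall>h i. h \<in> carrier G \<longrightarrow> is_gpoly G (\<tau> (h, i)) \<and> homogeneous G h (\<tau> (h, i)))"

definition TG_ideal :: "('g, 'b) monoid_scheme \<Rightarrow> ('g, 'f::field) gpoly set \<Rightarrow> bool" where
  "TG_ideal G I \<longleftrightarrow> I \<subseteq> {p. is_gpoly G p} \<and> pzero \<in> I \<and>
     (\<forall>p\<in>I. \<forall>q\<in>I. padd p q \<in> I) \<and>
     (\<forall>c. \<forall>p\<in>I. psmult c p \<in> I) \<and>
     (\<forall>p\<in>I. \<forall>q. is_gpoly G q \<longrightarrow> pmul q p \<in> I \<and> pmul p q \<in> I) \<and>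
     (\<forall>p\<in>I. \<forall>\<tau>. graded_subst G \<tau> \<longrightarrow> psubst \<tau> p \<in> I)"

definition TG_generated :: "('g, 'b) monoid_scheme \<Rightarrow> ('g, 'f::field) gpoly set \<Rightarrow> ('g, 'f) gpoly set" where
  "TG_generated G S = \<Inter> {I. TG_ideal G I \<and> S \<subseteq> I}"

definition peval :: "('g \<times> nat \<Rightarrow> ('f::field, 'n::finite) sqmat) \<Rightarrow> ('g, 'f) gpoly \<Rightarrow> ('f, 'n) sqmat" where
  "peval \<sigma> p = (\<lambda>i j. \<Sum>w\<in>supp p. p w * mprod (map \<sigma> w) i j)"

definition graded_ids :: "('g, 'b) monoid_scheme \<Rightarrow> ('g \<Rightarrow> ('f::field, 'n::finite) sqmat set) \<Rightarrow> ('g, 'f) gpoly set" where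
  "graded_ids G Bc = {p. is_gpoly G p \<and>
     (\<forall>\<sigma>. (\<forall>h i. h \<in> carrier G \<longrightarrow> \<sigma> (h, i) \<in> Bc h) \<longrightarrow> peval \<sigma> p = mzero)}"

definition mlmon :: "'g list \<Rightarrow> ('g, 'f::field) gpoly" where
  "mlmon hs = mon (zip hs [1..<length hs + 1])"

end

theory Submission
  imports Defs "HOL-Computational_Algebra.Polynomial" "HOL-Library.Multiset"
begin


section \<open>Matrices\<close>

lemma mmul_assoc: "mmul (mmul X Y) Z = mmul X (mmul Y Z)"
proof (intro ext)
  fix i j
  have "mmul (mmul X Y) Z i j = (\<Sum>k\<in>UNIV. \<Sum>l\<in>UNIV. X i l * Y l k * Z k j)"
    by (simp add: mmul_def sum_distrib_right)
  also have "\<dots> = (\<Sum>l\<in>UNIV. \<Sum>k\<in>UNIV. X i l * Y l k * Z k j)"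
    by (rule sum.swap)
  also have "\<dots> = mmul X (mmul Y Z) i j"
    by (simp add: mmul_def sum_distrib_left mult.assoc)
  finally show "mmul (mmul X Y) Z i j = mmul X (mmul Y Z) i j" .
qed

lemma mmul_mid_right: "mmul X mid = X"
proof (intro ext)
  fix i j
  have "(\<Sum>k\<in>UNIV. X i k * mid k j) = (\<Sum>k\<in>{j}. X i k * mid k j)"
    by (rule sum.mono_neutral_right) (auto simp: mid_def)
  then show "mmul X mid i j = X i j" by (simp add: mmul_def mid_def)
qed

lemma mmul_mid_left: "mmul mid X = X"
proof (intro ext)
  fix i j
  have "(\<Sum>k\<in>UNIV. mid i k * X k j) = (\<Sum>k\<in>{i}. mid i k * X k j)"
    by (rule sum.mono_neutral_right) (auto simp: mid_def)
  then show "mmul mid X i j = X i j" by (simp add: mmul_def mid_def)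
qed

lemma mprod_append: "mprod (a @ b) = mmul (mprod a) (mprod b)"
  by (induction a) (auto simp: mmul_mid_left mmul_assoc)

section \<open>Polynomials\<close>

lemma supp_mon[simp]: "supp (mon w :: ('g,'f::field) gpoly) = {w}"
  by (auto simp: supp_def mon_def)

lemma peval_superset:
  assumes "finite W" "supp p \<subseteq> W"
  shows "peval \<sigma> p = (\<lambda>i j. \<Sum>w\<in>W. p w * mprod (map \<sigma> w) i j)"
  unfolding peval_def
  by (intro ext sum.mono_neutral_left assms) (auto simp: supp_def)

lemma peval_mon: "peval \<sigma> (mon w) = mprod (map \<sigma> w)"
  unfolding peval_def supp_mon by (simp add: mon_def)

lemma supp_padd: "supp (padd p q) \<subseteq> supp p \<union> supp q"
  by (auto simp: supp_def padd_def)
lemma supp_psub: "supp (psub p q) \<subseteq> supp p \<union> supp q"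
  by (auto simp: supp_def psub_def)
lemma supp_psmult: "supp (psmult c p) \<subseteq> supp p"
  by (auto simp: supp_def psmult_def)

lemma peval_padd:
  assumes "finite (supp p)" "finite (supp q)"
  shows "peval \<sigma> (padd p q) = (\<lambda>i j. peval \<sigma> p i j + peval \<sigma> q i j)"
proof -
  let ?W = "supp p \<union> supp q"
  have f: "finite ?W" using assms by auto
  have 1: "peval \<sigma> p = (\<lambda>i j. \<Sum>w\<in>?W. p w * mprod (map \<sigma> w) i j)"
    by (rule peval_superset[OF f]) auto
  have 2: "peval \<sigma> q = (\<lambda>i j. \<Sum>w\<in>?W. q w * mprod (map \<sigma> w) i j)"
    by (rule peval_superset[OF f]) auto
  show ?thesis
    unfolding peval_superset[OF f supp_padd] 1 2
    by (auto simp: padd_def algebra_simps sum.distrib)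
qed

lemma peval_psub:
  assumes "finite (supp p)" "finite (supp q)"
  shows "peval \<sigma> (psub p q) = (\<lambda>i j. peval \<sigma> p i j - peval \<sigma> q i j)"
proof -
  let ?W = "supp p \<union> supp q"
  have f: "finite ?W" using assms by auto
  have 1: "peval \<sigma> p = (\<lambda>i j. \<Sum>w\<in>?W. p w * mprod (map \<sigma> w) i j)"
    by (rule peval_superset[OF f]) auto
  have 2: "peval \<sigma> q = (\<lambda>i j. \<Sum>w\<in>?W. q w * mprod (map \<sigma> w) i j)"
    by (rule peval_superset[OF f]) auto
  show ?thesis
    unfolding peval_superset[OF f supp_psub] 1 2
    by (auto simp: psub_def algebra_simps sum_subtractf)
qed

lemma peval_psmult:
  assumes "finite (supp p)"
  shows "peval \<sigma> (psmult c p) = (\<lambda>i j. c * peval \<sigma> p i j)"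
  unfolding peval_superset[OF assms supp_psmult] peval_superset[OF assms order_refl]
  by (auto simp: psmult_def sum_distrib_left mult.assoc)

lemma pmul_formula:
  assumes A: "finite A" "supp p \<subseteq> A" and B: "finite B" "supp q \<subseteq> B"
  shows "pmul p q u = (\<Sum>a\<in>A. \<Sum>b\<in>B. if a @ b = u then p a * q b else 0)"
proof -
  have inner: "(\<Sum>b\<in>B. if a @ b = u then p a * q b else 0) =
      (if length a \<le> length u \<and> take (length a) u = a then p a * q (drop (length a) u) else 0)" for a
  proof (cases "length a \<le> length u \<and> take (length a) u = a")
    case T: True
    then have eq: "a @ b = u \<longleftrightarrow> b = drop (length a) u" for b
      by (metis append_eq_conv_conj)
    show ?thesis
    proof (cases "drop (length a) u \<in> B")
      case True
      then show ?thesis using \<open>finite B\<close> T by (simp add: eq sum.delta')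
    next
      case False
      then have "q (drop (length a) u) = 0" using B by (auto simp: supp_def)
      then show ?thesis using False T by (auto simp: eq intro!: sum.neutral)
    qed
  next
    case False
    then have "a @ b \<noteq> u" for b by auto
    then show ?thesis using False by auto
  qed
  let ?K = "{k. k \<le> length u \<and> take k u \<in> A}"
  let ?g = "\<lambda>a. p a * q (drop (length a) u)"
  have inj: "inj_on (\<lambda>k. take k u) ?K"
  proof (rule inj_onI)
    fix k k' assume "k \<in> ?K" "k' \<in> ?K" "take k u = take k' u"
    then have "length (take k u) = length (take k' u)" by simp
    then show "k = k'" using \<open>k \<in> ?K\<close> \<open>k' \<in> ?K\<close> by simp
  qed
  have img: "(\<lambda>k. take k u) ` ?K = {a\<in>A. length a \<le> length u \<and> take (length a) u = a}"
  proof (intro equalityI subsetI)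
    fix a assume "a \<in> (\<lambda>k. take k u) ` ?K"
    then obtain k where "k \<in> ?K" "a = take k u" by blast
    then show "a \<in> {a\<in>A. length a \<le> length u \<and> take (length a) u = a}" by simp
  next
    fix a assume a: "a \<in> {a\<in>A. length a \<le> length u \<and> take (length a) u = a}"
    then have "length a \<in> ?K" by simp
    moreover have "a = take (length a) u" using a by simp
    ultimately show "a \<in> (\<lambda>k. take k u) ` ?K" by blast
  qed
  have "pmul p q u = (\<Sum>k\<in>{..length u}. p (take k u) * q (drop k u))" by (simp add: pmul_def)
  also have "\<dots> = (\<Sum>k\<in>?K. p (take k u) * q (drop k u))"
  proof (rule sum.mono_neutral_right)
    show "\<forall>k\<in>{..length u} - ?K. p (take k u) * q (drop k u) = 0"
      using A by (auto simp: supp_def)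
  qed auto
  also have "\<dots> = (\<Sum>k\<in>?K. ?g (take k u))"
    by (rule sum.cong) auto
  also have "\<dots> = sum (?g \<circ> (\<lambda>k. take k u)) ?K"
    by (simp only: comp_def)
  also have "\<dots> = (\<Sum>a\<in>(\<lambda>k. take k u) ` ?K. ?g a)"
    by (rule sum.reindex[OF inj, symmetric])
  also have "\<dots> = (\<Sum>a\<in>A. if length a \<le> length u \<and> take (length a) u = a then ?g a else 0)"
    unfolding img using A by (simp add: sum.inter_filter)
  finally show ?thesis by (simp add: inner)
qed

lemma supp_pmul_sub:
  assumes "finite (supp p)" "finite (supp q)"
  shows "supp (pmul p q) \<subseteq> (\<lambda>(a,b). a @ b) ` (supp p \<times> supp q)"
proof
  fix u assume "u \<in> supp (pmul p q)"
  then have "pmul p q u \<noteq> 0" by (simp add: supp_def)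
  then have "(\<Sum>a\<in>supp p. \<Sum>b\<in>supp q. if a @ b = u then p a * q b else 0) \<noteq> 0"
    unfolding pmul_formula[OF assms(1) order_refl assms(2) order_refl] .
  then obtain a where a: "a \<in> supp p" "(\<Sum>b\<in>supp q. if a @ b = u then p a * q b else 0) \<noteq> 0"
    by (rule sum.not_neutral_contains_not_neutral)
  from a(2) obtain b where b: "b \<in> supp q" "(if a @ b = u then p a * q b else 0) \<noteq> 0"
    by (rule sum.not_neutral_contains_not_neutral)
  then have "a @ b = u" by (auto split: if_splits)
  with a b show "u \<in> (\<lambda>(a,b). a @ b) ` (supp p \<times> supp q)" by auto
qed

lemma finite_supp_pmul:
  assumes "finite (supp p)" "finite (supp q)"
  shows "finite (supp (pmul p q))"
  using supp_pmul_sub[OF assms] assms by (meson finite_SigmaI finite_imageI finite_subset)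

lemma peval_pmul:
  assumes fp: "finite (supp p)" and fq: "finite (supp q)"
  shows "peval \<sigma> (pmul p q) = mmul (peval \<sigma> p) (peval \<sigma> q)"
proof (intro ext)
  fix i j
  let ?A = "supp p" and ?B = "supp q"
  let ?U = "(\<lambda>(a,b). a @ b) ` (?A \<times> ?B)"
  have fU: "finite ?U" using fp fq by auto
  let ?M = "\<lambda>w. mprod (map \<sigma> w)"
  have "peval \<sigma> (pmul p q) i j = (\<Sum>u\<in>?U. pmul p q u * ?M u i j)"
    unfolding peval_superset[OF fU supp_pmul_sub[OF fp fq]] by simp
  also have "\<dots> = (\<Sum>u\<in>?U. \<Sum>a\<in>?A. \<Sum>b\<in>?B. (if a @ b = u then p a * q b else 0) * ?M u i j)"
    by (simp add: pmul_formula[OF fp order_refl fq order_refl] sum_distrib_right)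
  also have "\<dots> = (\<Sum>a\<in>?A. \<Sum>b\<in>?B. \<Sum>u\<in>?U. (if a @ b = u then p a * q b else 0) * ?M u i j)"
    by (subst sum.swap) (rule sum.cong[OF refl], rule sum.swap)
  also have "\<dots> = (\<Sum>a\<in>?A. \<Sum>b\<in>?B. p a * q b * ?M (a @ b) i j)"
  proof (intro sum.cong refl)
    fix a b assume "a \<in> ?A" "b \<in> ?B"
    then have "a @ b \<in> ?U" by auto
    have "(\<Sum>u\<in>?U. (if a @ b = u then p a * q b else 0) * ?M u i j) = (\<Sum>u\<in>?U. if a @ b = u then p a * q b * ?M (a @ b) i j else 0)"
      by (rule sum.cong) auto
    then show "(\<Sum>u\<in>?U. (if a @ b = u then p a * q b else 0) * ?M u i j) = p a * q b * ?M (a @ b) i j"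
      using fU \<open>a @ b \<in> ?U\<close> by simp
  qed
  also have "\<dots> = (\<Sum>a\<in>?A. \<Sum>b\<in>?B. \<Sum>k\<in>UNIV. p a * q b * (?M a i k * ?M b k j))"
    by (simp add: mprod_append mmul_def sum_distrib_left)
  also have "\<dots> = (\<Sum>k\<in>UNIV. (\<Sum>a\<in>?A. p a * ?M a i k) * (\<Sum>b\<in>?B. q b * ?M b k j))"
  proof -
    have "(\<Sum>a\<in>?A. \<Sum>b\<in>?B. \<Sum>k\<in>UNIV. p a * q b * (?M a i k * ?M b k j))
        = (\<Sum>a\<in>?A. \<Sum>k\<in>UNIV. \<Sum>b\<in>?B. p a * q b * (?M a i k * ?M b k j))"
      by (rule sum.cong[OF refl], rule sum.swap)
    also have "\<dots> = (\<Sum>k\<in>UNIV. \<Sum>a\<in>?A. \<Sum>b\<in>?B. p a * q b * (?M a i k * ?M b k j))"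
      by (rule sum.swap)
    also have "\<dots> = (\<Sum>k\<in>UNIV. (\<Sum>a\<in>?A. p a * ?M a i k) * (\<Sum>b\<in>?B. q b * ?M b k j))"
      by (simp add: sum_product mult_ac)
    finally show ?thesis .
  qed
  also have "\<dots> = mmul (peval \<sigma> p) (peval \<sigma> q) i j"
    by (simp add: mmul_def peval_def)
  finally show "peval \<sigma> (pmul p q) i j = mmul (peval \<sigma> p) (peval \<sigma> q) i j" .
qed

lemma pmul_mon_mon: "pmul (mon a) (mon b) = (mon (a @ b) :: ('g,'f::field) gpoly)"
  by (rule ext, subst pmul_formula[of "{a}" "mon a" "{b}" "mon b"]) (simp_all, auto simp: mon_def)

lemma pmul_mon_Nil: "pmul p (mon []) = p"
proof (rule ext)
  fix u
  have "(\<Sum>k\<in>{..length u}. p (take k u) * mon [] (drop k u)) = (\<Sum>k\<in>{length u}. p (take k u) * mon [] (drop k u))"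
    by (rule sum.mono_neutral_right) (auto simp: mon_def)
  then show "pmul p (mon []) u = p u" by (simp add: pmul_def mon_def)
qed

lemma pprod_mon: "pprod (map mon us) = (mon (concat us) :: ('g,'f::field) gpoly)"
  by (induction us) (auto simp: pmul_mon_mon)

lemma pmul_psub_right: "pmul p (psub q r) = psub (pmul p q) (pmul p r)"
  by (auto simp: pmul_def psub_def algebra_simps sum_subtractf intro!: ext)
lemma pmul_psub_left: "pmul (psub q r) p = psub (pmul q p) (pmul r p)"
  by (auto simp: pmul_def psub_def algebra_simps sum_subtractf intro!: ext)

lemma finite_supp_pprod: "(\<And>q. q \<in> set qs \<Longrightarrow> finite (supp q)) \<Longrightarrow> finite (supp (pprod qs))"
  by (induction qs) (auto intro: finite_supp_pmul)

lemma peval_pprod: "(\<And>q. q \<in> set qs \<Longrightarrow> finite (supp q)) \<Longrightarrow>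
   peval \<sigma> (pprod qs) = mprod (map (peval \<sigma>) qs)"
  by (induction qs) (auto simp: peval_mon peval_pmul finite_supp_pprod)

lemma psubst_superset:
  assumes "finite W" "supp p \<subseteq> W"
  shows "psubst \<tau> p = (\<lambda>u. \<Sum>w\<in>W. p w * pprod (map \<tau> w) u)"
  unfolding psubst_def
  by (intro ext sum.mono_neutral_left assms) (auto simp: supp_def)

lemma supp_psubst_sub:
  "supp (psubst \<tau> p) \<subseteq> (\<Union>w\<in>supp p. supp (pprod (map \<tau> w)))"
proof
  fix u assume "u \<in> supp (psubst \<tau> p)"
  then have "(\<Sum>w\<in>supp p. p w * pprod (map \<tau> w) u) \<noteq> 0" by (simp add: supp_def psubst_def)
  then obtain w where "w \<in> supp p" "p w * pprod (map \<tau> w) u \<noteq> 0"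
    by (rule sum.not_neutral_contains_not_neutral)
  then show "u \<in> (\<Union>w\<in>supp p. supp (pprod (map \<tau> w)))" by (auto simp: supp_def)
qed

lemma peval_psubst:
  assumes fp: "finite (supp p)" and ft: "\<And>w v. w \<in> supp p \<Longrightarrow> v \<in> set w \<Longrightarrow> finite (supp (\<tau> v))"
  shows "peval \<sigma> (psubst \<tau> p) = peval (\<lambda>v. peval \<sigma> (\<tau> v)) p"
proof (intro ext)
  fix i j
  let ?U = "\<Union>w\<in>supp p. supp (pprod (map \<tau> w))"
  have fw: "finite (supp (pprod (map \<tau> w)))" if "w \<in> supp p" for w
    using ft[OF that] by (intro finite_supp_pprod) auto
  have fU: "finite ?U" using fp fw by auto
  let ?M = "\<lambda>w. mprod (map \<sigma> w)"
  have "peval \<sigma> (psubst \<tau> p) i j = (\<Sum>u\<in>?U. psubst \<tau> p u * ?M u i j)"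
    unfolding peval_superset[OF fU supp_psubst_sub] by simp
  also have "\<dots> = (\<Sum>w\<in>supp p. p w * (\<Sum>u\<in>?U. pprod (map \<tau> w) u * ?M u i j))"
  proof -
    have "(\<Sum>u\<in>?U. psubst \<tau> p u * ?M u i j) = (\<Sum>u\<in>?U. \<Sum>w\<in>supp p. p w * (pprod (map \<tau> w) u * ?M u i j))"
      by (simp add: psubst_def sum_distrib_right mult.assoc)
    also have "\<dots> = (\<Sum>w\<in>supp p. \<Sum>u\<in>?U. p w * (pprod (map \<tau> w) u * ?M u i j))"
      by (rule sum.swap)
    finally show ?thesis by (simp add: sum_distrib_left)
  qed
  also have "\<dots> = (\<Sum>w\<in>supp p. p w * peval \<sigma> (pprod (map \<tau> w)) i j)"
  proof (intro sum.cong refl arg_cong2[where f="(*)"])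
    fix w assume w: "w \<in> supp p"
    have sU: "supp (pprod (map \<tau> w)) \<subseteq> ?U" using w by auto
    show "(\<Sum>u\<in>?U. pprod (map \<tau> w) u * ?M u i j) = peval \<sigma> (pprod (map \<tau> w)) i j"
      unfolding peval_superset[OF fU sU] by simp
  qed
  also have "\<dots> = (\<Sum>w\<in>supp p. p w * mprod (map (\<lambda>v. peval \<sigma> (\<tau> v)) w) i j)"
    by (intro sum.cong refl) (subst peval_pprod, use ft in \<open>auto simp: comp_def\<close>)
  also have "\<dots> = peval (\<lambda>v. peval \<sigma> (\<tau> v)) p i j" by (simp only: peval_def comp_def)
  finally show "peval \<sigma> (psubst \<tau> p) i j = peval (\<lambda>v. peval \<sigma> (\<tau> v)) p i j" .
qed




lemma gp_mon: "w \<noteq> [] \<Longrightarrow> (\<forall>v\<in>set w. fst v \<in> carrier G) \<Longrightarrow> is_gpoly G (mon w :: ('g,'f::field) gpoly)"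
  unfolding is_gpoly_def supp_mon by (auto simp: mon_def)

lemma gp_pzero: "is_gpoly G (pzero :: ('g,'f::field) gpoly)"
  by (auto simp: is_gpoly_def pzero_def supp_def)

lemma gp_padd: "is_gpoly G p \<Longrightarrow> is_gpoly G q \<Longrightarrow> is_gpoly G (padd p q)"
  unfolding is_gpoly_def using supp_padd[of p q] by (auto simp: padd_def intro: finite_subset)

lemma gp_psub: "is_gpoly G p \<Longrightarrow> is_gpoly G q \<Longrightarrow> is_gpoly G (psub p q)"
  unfolding is_gpoly_def using supp_psub[of p q] by (auto simp: psub_def intro: finite_subset)

lemma gp_psmult: "is_gpoly G p \<Longrightarrow> is_gpoly G (psmult c p)"
  unfolding is_gpoly_def using supp_psmult[of c p] by (auto simp: psmult_def intro: finite_subset)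

lemma pmul_Nil: "pmul p q [] = p [] * q []"
  by (simp add: pmul_def)

lemma gp_pmul:
  assumes "is_gpoly G p" "is_gpoly G q" shows "is_gpoly G (pmul p q)"
proof -
  have f: "finite (supp p)" "finite (supp q)" using assms by (auto simp: is_gpoly_def)
  show ?thesis unfolding is_gpoly_def
  proof (intro conjI ballI)
    show "finite (supp (pmul p q))" using finite_supp_pmul[OF f] .
    show "pmul p q [] = 0" using assms by (simp add: pmul_Nil is_gpoly_def)
    fix w v assume "w \<in> supp (pmul p q)" "v \<in> set w"
    with supp_pmul_sub[OF f] obtain a b where "a \<in> supp p" "b \<in> supp q" "w = a @ b" by auto
    with \<open>v \<in> set w\<close> assms show "fst v \<in> carrier G" by (auto simp: is_gpoly_def)
  qed
qed

lemma gp_pprod_letters: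
  assumes "\<And>q. q \<in> set qs \<Longrightarrow> is_gpoly G q"
  shows "\<forall>u\<in>supp (pprod qs). \<forall>v\<in>set u. fst v \<in> carrier G"
  using assms
proof (induction qs)
  case Nil then show ?case by simp
next
  case (Cons q qs)
  have f: "finite (supp q)" "finite (supp (pprod qs))"
    using Cons.prems by (auto simp: is_gpoly_def intro!: finite_supp_pprod)
  show ?case
  proof (intro ballI)
    fix u v assume "u \<in> supp (pprod (q # qs))" "v \<in> set u"
    with supp_pmul_sub[OF f] obtain a b where "a \<in> supp q" "b \<in> supp (pprod qs)" "u = a @ b" by auto
    with \<open>v \<in> set u\<close> Cons show "fst v \<in> carrier G" by (auto simp: is_gpoly_def)
  qed
qed

lemma gp_psubst:
  assumes p: "is_gpoly G p" and t: "graded_subst G \<tau>"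
  shows "is_gpoly G (psubst \<tau> p)"
proof -
  have tg: "is_gpoly G (\<tau> v)" if "w \<in> supp p" "v \<in> set w" for w v
  proof -
    have "fst v \<in> carrier G" using p that by (auto simp: is_gpoly_def)
    then show ?thesis using t by (cases v) (auto simp: graded_subst_def)
  qed
  have fp: "finite (supp p)" using p by (simp add: is_gpoly_def)
  have fw: "finite (supp (pprod (map \<tau> w)))" if "w \<in> supp p" for w
    using tg[OF that] by (intro finite_supp_pprod) (auto simp: is_gpoly_def)
  show ?thesis unfolding is_gpoly_def
  proof (intro conjI ballI)
    show "finite (supp (psubst \<tau> p))"
      using supp_psubst_sub[of \<tau> p] fp fw by (auto intro: finite_subset)
    have "pprod (map \<tau> w) [] = 0" if "w \<in> supp p" for w
    proof -
      have "w \<noteq> []" using that p by (auto simp: is_gpoly_def supp_def)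
      then obtain v w' where "w = v # w'" by (cases w) auto
      then show ?thesis using tg[OF that] by (simp add: pmul_Nil is_gpoly_def)
    qed
    then show "psubst \<tau> p [] = 0" by (simp add: psubst_def)
    fix u v assume "u \<in> supp (psubst \<tau> p)" "v \<in> set u"
    then obtain w where w: "w \<in> supp p" "u \<in> supp (pprod (map \<tau> w))" using supp_psubst_sub by blast
    have "\<forall>u\<in>supp (pprod (map \<tau> w)). \<forall>v\<in>set u. fst v \<in> carrier G"
      by (rule gp_pprod_letters) (use tg w in auto)
    with w \<open>v \<in> set u\<close> show "fst v \<in> carrier G" by auto
  qed
qed

lemma peval_pzero: "peval \<sigma> pzero = mzero"
  by (simp add: peval_def pzero_def supp_def mzero_def)

lemma mmul_mzero_left: "mmul mzero X = mzero" by (simp add: mmul_def mzero_def)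
lemma mmul_mzero_right: "mmul X mzero = mzero" by (simp add: mmul_def mzero_def)

lemma sum_UNIV_single:
  fixes f :: "'n::finite \<Rightarrow> 'f::comm_monoid_add"
  assumes "\<And>k. k \<noteq> b \<Longrightarrow> f k = 0"
  shows "(\<Sum>k\<in>UNIV. f k) = f b"
proof -
  have "(\<Sum>k\<in>UNIV. f k) = (\<Sum>k\<in>{b}. f k)"
    by (rule sum.mono_neutral_right) (use assms in auto)
  then show ?thesis by simp
qed

definition gprod :: "('g, 'b) monoid_scheme \<Rightarrow> 'g list \<Rightarrow> 'g" where
  "gprod G hs = foldr (\<lambda>h acc. h \<otimes>\<^bsub>G\<^esub> acc) hs \<one>\<^bsub>G\<^esub>"

lemma gprod_simps[simp]: "gprod G [] = \<one>\<^bsub>G\<^esub>" "gprod G (h # hs) = h \<otimes>\<^bsub>G\<^esub> gprod G hs"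
  by (simp_all add: gprod_def)

lemma wdeg_gprod: "wdeg G w = gprod G (map fst w)"
  by (induction w) (simp_all add: wdeg_def)

locale gset = group G for G (structure) +
  fixes gs :: "'n::finite \<Rightarrow> 'g" and S :: "('n \<times> 'n) set"
  assumes gsc: "\<And>i. gs i \<in> carrier G" and ginj: "inj gs"
    and Strans: "\<And>a b c. (a,b) \<in> S \<Longrightarrow> (b,c) \<in> S \<Longrightarrow> (a,c) \<in> S"
begin

lemma gprod_carr: "set hs \<subseteq> carrier G \<Longrightarrow> gprod G hs \<in> carrier G"
  by (induction hs) auto

lemma gprod_append: "set xs \<subseteq> carrier G \<Longrightarrow> set ys \<subseteq> carrier G \<Longrightarrow>
   gprod G (xs @ ys) = gprod G xs \<otimes> gprod G ys"
  by (induction xs) (auto simp: gprod_carr m_assoc)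

lemma inv_mult_eq_cancel:
  assumes "x \<in> carrier G" "y \<in> carrier G" "z \<in> carrier G"
    and "inv x \<otimes> y = inv x \<otimes> z"
  shows "y = z"
  using assms by simp

lemma inv_mult_eq_cancel2:
  assumes "x \<in> carrier G" "y \<in> carrier G" "z \<in> carrier G"
    and "inv x \<otimes> z = inv y \<otimes> z"
  shows "x = y"
  using assms by (metis inv_inv inv_closed right_cancel)

definition nx :: "'n \<Rightarrow> 'g \<Rightarrow> 'n option" where
  "nx a h = (if \<exists>b. (a,b) \<in> S \<and> inv (gs a) \<otimes> gs b = h
     then Some (THE b. (a,b) \<in> S \<and> inv (gs a) \<otimes> gs b = h) else None)"

lemma nx_uniq: "inv (gs a) \<otimes> gs b = inv (gs a) \<otimes> gs b' \<Longrightarrow> b = b'"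
  using inv_mult_eq_cancel[OF gsc gsc gsc] ginj by (meson injD)

lemma nx_Some: "nx a h = Some b \<longleftrightarrow> (a,b) \<in> S \<and> inv (gs a) \<otimes> gs b = h"
proof
  assume h: "nx a h = Some b"
  then obtain b0 where b0: "(a,b0) \<in> S \<and> inv (gs a) \<otimes> gs b0 = h" by (auto simp: nx_def split: if_splits)
  then have "(THE b. (a,b) \<in> S \<and> inv (gs a) \<otimes> gs b = h) = b0"
    using nx_uniq by blast
  then have "nx a h = Some b0" using b0 by (auto simp: nx_def)
  then show "(a,b) \<in> S \<and> inv (gs a) \<otimes> gs b = h" using h b0 by simp
next
  assume h: "(a,b) \<in> S \<and> inv (gs a) \<otimes> gs b = h"
  then have "(THE b. (a,b) \<in> S \<and> inv (gs a) \<otimes> gs b = h) = b"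
    using nx_uniq by blast
  then show "nx a h = Some b" using h by (auto simp: nx_def)
qed

lemma nx_carr: "nx a h = Some b \<Longrightarrow> h \<in> carrier G"
  using nx_Some gsc by (metis inv_closed m_closed)

primrec wd :: "'n \<Rightarrow> 'g list \<Rightarrow> 'n option" where
  "wd a [] = Some a"
| "wd a (h # hs) = (case nx a h of None \<Rightarrow> None | Some b \<Rightarrow> wd b hs)"

lemma wd_append: "wd a (xs @ ys) = (case wd a xs of None \<Rightarrow> None | Some b \<Rightarrow> wd b ys)"
  by (induction xs arbitrary: a) (auto split: option.splits)

lemma wd_Some_carr: "wd a hs = Some b \<Longrightarrow> set hs \<subseteq> carrier G"
  by (induction hs arbitrary: a) (auto split: option.splits dest: nx_carr)

lemma wd_Some_deg: "wd a hs = Some b \<Longrightarrow> inv (gs a) \<otimes> gs b = gprod G hs"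
proof (induction hs arbitrary: a)
  case Nil then show ?case using gsc by simp
next
  case (Cons h hs)
  then obtain c where c: "nx a h = Some c" "wd c hs = Some b" by (auto split: option.splits)
  have ih: "inv (gs c) \<otimes> gs b = gprod G hs" using Cons.IH[OF c(2)] .
  have hh: "h = inv (gs a) \<otimes> gs c" using c(1) nx_Some by auto
  have "gprod G (h # hs) = (inv (gs a) \<otimes> gs c) \<otimes> (inv (gs c) \<otimes> gs b)"
    by (simp add: hh ih)
  also have "\<dots> = inv (gs a) \<otimes> gs b"
    using gsc by (simp add: m_assoc flip: m_assoc[of "gs c"])
  finally show ?case by simp
qed

lemma wd_Some_S: "wd a hs = Some b \<Longrightarrow> hs \<noteq> [] \<Longrightarrow> (a,b) \<in> S"
proof (induction hs arbitrary: a)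
  case Nil then show ?case by simp
next
  case (Cons h hs)
  then obtain c where c: "nx a h = Some c" "wd c hs = Some b" by (auto split: option.splits)
  show ?case
  proof (cases "hs = []")
    case True then show ?thesis using c nx_Some by auto
  next
    case False
    then show ?thesis using Cons.IH[OF c(2) False] c(1) nx_Some Strans by blast
  qed
qed

lemma wd_single: "wd a hs = Some b \<Longrightarrow> hs \<noteq> [] \<Longrightarrow> wd a [gprod G hs] = Some b"
proof -
  assume "wd a hs = Some b" "hs \<noteq> []"
  then have "nx a (gprod G hs) = Some b" using wd_Some_S wd_Some_deg nx_Some by auto
  then show ?thesis by simp
qed

lemma wd_inj: "wd a hs = Some c \<Longrightarrow> wd a' hs = Some c \<Longrightarrow> a = a'"
  using wd_Some_deg inv_mult_eq_cancel2[OF gsc gsc gsc] ginj by (metis injD)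

definition Bc :: "'g \<Rightarrow> ('f::field, 'n) sqmat set" where
  "Bc h = unit_span S \<inter> elem_comp G gs h"

lemma Bc_iff: "X \<in> Bc h \<longleftrightarrow> (\<forall>a b. X a b \<noteq> 0 \<longrightarrow> nx a h = Some b)"
  by (auto simp: Bc_def unit_span_def elem_comp_def nx_Some)

abbreviation wk :: "'n \<Rightarrow> ('g \<times> nat) list \<Rightarrow> 'n option" where
  "wk a w \<equiv> wd a (map fst w)"

primrec wt :: "('g \<times> nat \<Rightarrow> ('f::field, 'n) sqmat) \<Rightarrow> 'n \<Rightarrow> ('g \<times> nat) list \<Rightarrow> 'f" where
  "wt \<sigma> a [] = 1"
| "wt \<sigma> a (l # w) = (case nx a (fst l) of None \<Rightarrow> 0 | Some b \<Rightarrow> \<sigma> l a b * wt \<sigma> b w)"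

lemma PW:
  assumes "\<And>l a b. l \<in> set w \<Longrightarrow> \<sigma> l a b \<noteq> 0 \<Longrightarrow> nx a (fst l) = Some b"
  shows "mprod (map \<sigma> w) a c = (if wk a w = Some c then wt \<sigma> a w else 0)"
  using assms
proof (induction w arbitrary: a)
  case Nil then show ?case by (simp add: mid_def)
next
  case (Cons l w)
  show ?case
  proof (cases "nx a (fst l)")
    case None
    then have "\<sigma> l a k = 0" for k using Cons.prems by fastforce
    then show ?thesis using None by (simp add: mmul_def)
  next
    case (Some b)
    have "mprod (map \<sigma> (l # w)) a c = (\<Sum>k\<in>UNIV. \<sigma> l a k * mprod (map \<sigma> w) k c)"
      by (simp add: mmul_def)
    also have "\<dots> = \<sigma> l a b * mprod (map \<sigma> w) b c"
    proof (rule sum_UNIV_single)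
      fix k assume "k \<noteq> b"
      then have "\<sigma> l a k = 0" using Cons.prems[of l a k] Some by auto
      then show "\<sigma> l a k * mprod (map \<sigma> w) k c = 0" by simp
    qed
    also have "\<dots> = (if wk a (l # w) = Some c then wt \<sigma> a (l # w) else 0)"
      using Cons.IH[of b] Cons.prems Some by auto
    finally show ?thesis .
  qed
qed

primrec ce :: "'n \<Rightarrow> ('g \<times> nat) list \<Rightarrow> (('g \<times> nat) \<times> 'n \<times> 'n) multiset" where
  "ce a [] = {#}"
| "ce a (l # w) = (case nx a (fst l) of None \<Rightarrow> {#} | Some b \<Rightarrow> add_mset (l, a, b) (ce b w))"

lemma wt_ce: "wk a w \<noteq> None \<Longrightarrow> wt \<sigma> a w = (\<Prod>x\<in>#ce a w. \<sigma> (fst x) (fst (snd x)) (snd (snd x)))"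
  by (induction w arbitrary: a) (auto split: option.splits)

lemma graded_Bc: "\<sigma> (h, i) \<in> Bc h \<Longrightarrow> \<sigma> (h, i) a b \<noteq> 0 \<Longrightarrow> nx a h = Some b"
  using Bc_iff by blast

lemma homog_eval:
  assumes sg: "\<And>h i. h \<in> carrier G \<Longrightarrow> \<sigma> (h, i) \<in> Bc h"
    and q: "is_gpoly G q" "homogeneous G h q"
  shows "peval \<sigma> q \<in> Bc h"
  unfolding Bc_iff
proof (intro allI impI)
  fix a b assume "peval \<sigma> q a b \<noteq> 0"
  then obtain w where w: "w \<in> supp q" "q w * mprod (map \<sigma> w) a b \<noteq> 0"
    unfolding peval_def by (rule sum.not_neutral_contains_not_neutral)
  have lc: "\<forall>v\<in>set w. fst v \<in> carrier G" using q w by (auto simp: is_gpoly_def)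
  have "mprod (map \<sigma> w) a b = (if wk a w = Some b then wt \<sigma> a w else 0)"
  proof (rule PW)
    fix l a' b' assume "l \<in> set w" "\<sigma> l a' b' \<noteq> 0"
    then show "nx a' (fst l) = Some b'" using sg lc graded_Bc by (metis prod.collapse)
  qed
  with w have wk: "wk a w = Some b" by (auto split: if_splits)
  have "w \<noteq> []" using q w by (auto simp: is_gpoly_def supp_def)
  then have "wd a [gprod G (map fst w)] = Some b" using wd_single[OF wk] by simp
  moreover have "gprod G (map fst w) = h" using q w by (simp add: homogeneous_def wdeg_gprod)
  ultimately show "nx a h = Some b" by (simp split: option.splits)
qed

lemma graded_ids_eq: "graded_ids G Bc = {p. is_gpoly G p \<and>
     (\<forall>\<sigma>. (\<forall>h i. h \<in> carrier G \<longrightarrow> \<sigma> (h, i) \<in> Bc h) \<longrightarrow> peval \<sigma> p = mzero)}"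
  by (simp add: graded_ids_def)

lemma TG_graded_ids: "TG_ideal G (graded_ids G (Bc :: 'g \<Rightarrow> ('f::field, 'n) sqmat set))"
  unfolding TG_ideal_def
proof (intro conjI ballI allI impI)
  show "graded_ids G Bc \<subseteq> {p. is_gpoly G p}" by (auto simp: graded_ids_def)
  show "pzero \<in> graded_ids G Bc" by (simp add: graded_ids_def gp_pzero peval_pzero)
  fix p assume p: "p \<in> graded_ids G Bc"
  then have gp: "is_gpoly G p" and fp: "finite (supp p)" by (auto simp: graded_ids_def is_gpoly_def)
  show "padd p q \<in> graded_ids G Bc" if q: "q \<in> graded_ids G Bc" for q
  proof -
    have gq: "is_gpoly G q" and fq: "finite (supp q)" using q by (auto simp: graded_ids_def is_gpoly_def)
    show ?thesis
      using p q by (auto simp: graded_ids_def gp_padd gp gq peval_padd fp fq mzero_def)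
  qed
  {
    fix c show "psmult c p \<in> graded_ids G Bc"
      using p by (auto simp: graded_ids_def gp_psmult gp peval_psmult fp mzero_def)
  }
  show "pmul q p \<in> graded_ids G Bc" if gq: "is_gpoly G q" for q
  proof -
    have fq: "finite (supp q)" using gq by (auto simp: is_gpoly_def)
    show ?thesis
      using p by (auto simp: graded_ids_def gp_pmul gp gq peval_pmul fp fq mmul_mzero_left mmul_mzero_right)
  qed
  show "pmul p q \<in> graded_ids G Bc" if gq: "is_gpoly G q" for q
  proof -
    have fq: "finite (supp q)" using gq by (auto simp: is_gpoly_def)
    show ?thesis
      using p by (auto simp: graded_ids_def gp_pmul gp gq peval_pmul fp fq mmul_mzero_left mmul_mzero_right)
  qed
  show "psubst \<tau> p \<in> graded_ids G Bc" if t: "graded_subst G \<tau>" for \<tau>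
    unfolding graded_ids_def
  proof (intro CollectI conjI allI impI)
    show "is_gpoly G (psubst \<tau> p)" using gp_psubst[OF gp t] .
    show "peval \<sigma> (psubst \<tau> p) = mzero" if sg: "\<forall>h i. h \<in> carrier G \<longrightarrow> \<sigma> (h, i) \<in> Bc h" for \<sigma>
    proof -
      have ft: "finite (supp (\<tau> v))" if "w \<in> supp p" "v \<in> set w" for w v
      proof -
        have "fst v \<in> carrier G" using gp that by (auto simp: is_gpoly_def)
        then show ?thesis using t by (cases v) (auto simp: graded_subst_def is_gpoly_def)
      qed
      have e: "peval \<sigma> (psubst \<tau> p) = peval (\<lambda>v. peval \<sigma> (\<tau> v)) p"
        by (rule peval_psubst[OF fp ft])
      have sg': "\<forall>h i. h \<in> carrier G \<longrightarrow> peval \<sigma> (\<tau> (h,i)) \<in> Bc h"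
        using sg t by (auto simp: graded_subst_def intro!: homog_eval)
      have "peval (\<lambda>v. peval \<sigma> (\<tau> v)) p = mzero"
        using p sg' unfolding graded_ids_def by auto
      then show ?thesis using e by simp
    qed
  qed
qed

end



lemma psub_self: "psub p p = pzero" by (auto simp: psub_def pzero_def)
lemma padd_psub_trans: "padd (psub a b) (psub b c) = psub a c" by (auto simp: psub_def padd_def)

lemma mon_same[simp]: "mon w w = 1" by (simp add: mon_def)
lemma mon_neq: "u \<noteq> w \<Longrightarrow> mon w u = 0" by (simp add: mon_def)

lemma pprod_map_mon: "pprod (map (\<lambda>v. mon (f v)) w) = (mon (concat (map f w)) :: ('g,'f::field) gpoly)"
  by (induction w) (auto simp: pmul_mon_mon)

lemma psubst_mon: "psubst (\<lambda>v. mon (f v)) (mon w) = (mon (concat (map f w)) :: ('g,'f::field) gpoly)"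
  unfolding psubst_def supp_mon by (simp add: pprod_map_mon)

lemma supp_psub_mon: "supp (psub (mon w1) (mon w2) :: ('g,'f::field) gpoly) \<subseteq> {w1, w2}"
  by (auto simp: supp_def psub_def mon_def)

lemma psubst_psub_mon:
  assumes "w1 \<noteq> w2"
  shows "psubst (\<lambda>v. mon (f v)) (psub (mon w1) (mon w2)) =
     (psub (mon (concat (map f w1))) (mon (concat (map f w2))) :: ('g,'f::field) gpoly)"
proof (rule ext)
  fix u
  have "psubst (\<lambda>v. mon (f v)) (psub (mon w1) (mon w2) :: ('g,'f) gpoly) u =
     (\<Sum>w\<in>{w1,w2}. psub (mon w1) (mon w2) w * pprod (map (\<lambda>v. mon (f v)) w) u)"
    by (subst psubst_superset[OF _ supp_psub_mon]) auto
  also have "\<dots> = psub (mon (concat (map f w1))) (mon (concat (map f w2))) u"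
    using assms by (simp add: pprod_map_mon psub_def mon_neq)
  finally show "psubst (\<lambda>v. mon (f v)) (psub (mon w1) (mon w2)) u =
     (psub (mon (concat (map f w1))) (mon (concat (map f w2))) :: ('g,'f::field) gpoly) u" .
qed

context gset begin

definition Dset :: "'g set" where "Dset = (\<lambda>(a,b). inv (gs a) \<otimes> gs b) ` UNIV"

lemma finite_Dset: "finite Dset" by (simp add: Dset_def)

lemma nx_Dset: "nx c h = Some d \<Longrightarrow> h \<in> Dset"
  by (auto simp: Dset_def nx_Some)

lemma Dset_carr: "Dset \<subseteq> carrier G"
  using gsc by (auto simp: Dset_def)

lemma Bc_nz:
  assumes "nx a h = Some b" shows "Bc h \<noteq> {mzero :: ('f::field,'n) sqmat}"
proof
  let ?E = "(\<lambda>i j. if i = a \<and> j = b then 1 else 0) :: ('f,'n) sqmat"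
  assume "Bc h = {mzero :: ('f,'n) sqmat}"
  moreover have "?E \<in> Bc h" using assms by (auto simp: Bc_iff)
  ultimately have "?E = mzero" by auto
  then have "?E a b = mzero a b" by (rule arg_cong[where f="\<lambda>M. M a b"])
  then show False by (simp add: mzero_def)
qed

lemma Bc_z:
  assumes "\<And>a. nx a h = None" shows "Bc h = {mzero :: ('f::field,'n) sqmat}"
  using assms by (auto simp: Bc_iff mzero_def fun_eq_iff)

lemma gsub_mon:
  assumes "\<And>h i. h \<in> carrier G \<Longrightarrow> f (h,i) \<noteq> [] \<and> (\<forall>v\<in>set (f (h,i)). fst v \<in> carrier G) \<and> gprod G (map fst (f (h,i))) = h"
  shows "graded_subst G (\<lambda>v. mon (f v) :: ('g,'f::field) gpoly)"
  unfolding graded_subst_def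
proof (intro allI impI conjI)
  fix h i assume h: "h \<in> carrier G"
  show "is_gpoly G (mon (f (h,i)) :: ('g,'f) gpoly)" using assms[OF h] by (intro gp_mon) auto
  show "homogeneous G h (mon (f (h,i)) :: ('g,'f) gpoly)" using assms[OF h] by (simp add: homogeneous_def wdeg_gprod)
qed

lemma wk_carr: "wk a w = Some b \<Longrightarrow> \<forall>v\<in>set w. fst v \<in> carrier G"
  using wd_Some_carr by fastforce

lemma ce_append: "wk a x = Some b \<Longrightarrow> ce a (x @ y) = ce a x + ce b y"
  by (induction x arbitrary: a) (auto split: option.splits)

lemma size_ce: "wk a w \<noteq> None \<Longrightarrow> size (ce a w) = length w"
  by (induction w arbitrary: a) (auto split: option.splits)

lemma ce_split:
  "x \<in># ce a w \<Longrightarrow> \<exists>u v. w = u @ fst x # v \<and> wk a u = Some (fst (snd x)) \<and>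
      nx (fst (snd x)) (fst (fst x)) = Some (snd (snd x))"
proof (induction w arbitrary: a)
  case Nil then show ?case by simp
next
  case (Cons l r)
  then obtain b where b: "nx a (fst l) = Some b" and x: "x = (l,a,b) \<or> x \<in># ce b r"
    by (auto split: option.splits)
  show ?case
  proof (cases "x = (l,a,b)")
    case True then show ?thesis using b by (intro exI[of _ "[]"] exI[of _ r]) auto
  next
    case False
    then have "x \<in># ce b r" using x by auto
    from Cons.IH[OF this] obtain u v where "r = u @ fst x # v" "wk b u = Some (fst (snd x))"
        "nx (fst (snd x)) (fst (fst x)) = Some (snd (snd x))" by blast
    then have "l # r = (l # u) @ fst x # v \<and> wk a (l # u) = Some (fst (snd x)) \<and>
        nx (fst (snd x)) (fst (fst x)) = Some (snd (snd x))" using b by simp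
    then show ?thesis by blast
  qed
qed

lemma ce_inv:
  assumes "wk c r \<noteq> None" "c \<notin> V" "ce c r \<subseteq># M"
    and "\<And>x. x \<in># M \<Longrightarrow> fst (snd x) \<notin> V \<Longrightarrow> snd (snd x) \<notin> V"
  shows "\<forall>x\<in>#ce c r. fst (snd x) \<notin> V"
  using assms(1-3)
proof (induction r arbitrary: c)
  case Nil then show ?case by simp
next
  case (Cons m r)
  then obtain d where d: "nx c (fst m) = Some d" by (auto split: option.splits)
  then have ce: "ce c (m # r) = add_mset (m, c, d) (ce d r)" by simp
  have "(m,c,d) \<in># M" using Cons.prems ce by (metis mset_subset_eq_insertD)
  then have "d \<notin> V" using assms(4)[of "(m,c,d)"] Cons.prems by auto
  moreover have "ce d r \<subseteq># M"
  proof -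
    have "ce d r \<subseteq># add_mset (m,c,d) (ce d r)" by simp
    then show ?thesis using Cons.prems ce by (metis subset_mset.order_trans)
  qed
  moreover have "wk d r \<noteq> None" using Cons.prems d by simp
  ultimately have "\<forall>x\<in>#ce d r. fst (snd x) \<notin> V" using Cons.IH by blast
  then show ?case using ce Cons.prems by auto
qed

end

locale gJ = gset G gs S for G (structure) and gs :: "'n::finite \<Rightarrow> 'g" and S +
  fixes J :: "('g, 'f::field) gpoly set"
  assumes TG: "TG_ideal G J"
    and G1: "Bc \<one> \<noteq> {mzero :: ('f,'n) sqmat} \<Longrightarrow> psub (mon [(\<one>,1),(\<one>,2)]) (mon [(\<one>,2),(\<one>,1)]) \<in> J"
    and G2: "h \<in> carrier G \<Longrightarrow> h \<noteq> \<one> \<Longrightarrow> Bc h \<noteq> {mzero :: ('f,'n) sqmat} \<Longrightarrow>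
       psub (mon [(h,1),(inv h,2),(h,3)]) (mon [(h,3),(inv h,2),(h,1)]) \<in> J"
    and G3: "h \<in> carrier G \<Longrightarrow> Bc h = {mzero :: ('f,'n) sqmat} \<Longrightarrow> mon [(h,1)] \<in> J"
    and G4: "2 \<le> length hs \<Longrightarrow> length hs \<le> 2 * card (UNIV :: 'n set) - 1 \<Longrightarrow> set hs \<subseteq> Dset \<Longrightarrow>
       mlmon hs \<in> graded_ids G (Bc :: 'g \<Rightarrow> ('f,'n) sqmat set) \<Longrightarrow> mlmon hs \<in> J"
begin

lemma J_pzero: "pzero \<in> J" using TG by (simp add: TG_ideal_def)
lemma J_padd: "p \<in> J \<Longrightarrow> q \<in> J \<Longrightarrow> padd p q \<in> J" using TG by (simp add: TG_ideal_def)
lemma J_psmult: "p \<in> J \<Longrightarrow> psmult c p \<in> J" using TG by (simp add: TG_ideal_def)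
lemma J_lmul: "p \<in> J \<Longrightarrow> is_gpoly G q \<Longrightarrow> pmul q p \<in> J" using TG by (simp add: TG_ideal_def)
lemma J_rmul: "p \<in> J \<Longrightarrow> is_gpoly G q \<Longrightarrow> pmul p q \<in> J" using TG by (simp add: TG_ideal_def)
lemma J_subst: "p \<in> J \<Longrightarrow> graded_subst G \<tau> \<Longrightarrow> psubst \<tau> p \<in> J" using TG by (simp add: TG_ideal_def)
lemma J_gpoly: "p \<in> J \<Longrightarrow> is_gpoly G p" using TG by (auto simp: TG_ideal_def)

lemma J_psub: "p \<in> J \<Longrightarrow> q \<in> J \<Longrightarrow> psub p q \<in> J"
proof -
  assume "p \<in> J" "q \<in> J"
  then have "padd p (psmult (-1) q) \<in> J" by (intro J_padd J_psmult)
  moreover have "padd p (psmult (-1) q) = psub p q" by (auto simp: padd_def psmult_def psub_def)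
  ultimately show ?thesis by simp
qed

lemma J_sum: "finite K \<Longrightarrow> (\<And>k. k \<in> K \<Longrightarrow> f k \<in> J) \<Longrightarrow> (\<lambda>u. \<Sum>k\<in>K. f k u) \<in> J"
proof (induction K rule: finite_induct)
  case empty then show ?case using J_pzero by (simp add: pzero_def)
next
  case (insert k K)
  then have "padd (f k) (\<lambda>u. \<Sum>k\<in>K. f k u) \<in> J" by (intro J_padd) auto
  then show ?case using insert by (simp add: padd_def)
qed

lemma J_ctx_psub:
  assumes "psub (mon x) (mon y) \<in> J" "\<forall>v\<in>set \<alpha>. fst v \<in> carrier G" "\<forall>v\<in>set \<beta>. fst v \<in> carrier G"
  shows "psub (mon (\<alpha> @ x @ \<beta>)) (mon (\<alpha> @ y @ \<beta>)) \<in> J"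
proof -
  have 1: "psub (mon (\<alpha> @ x)) (mon (\<alpha> @ y)) \<in> J"
  proof (cases "\<alpha> = []")
    case True then show ?thesis using assms by simp
  next
    case False
    have "pmul (mon \<alpha>) (psub (mon x) (mon y)) \<in> J" using assms False by (intro J_lmul gp_mon) auto
    then show ?thesis by (simp add: pmul_psub_right pmul_mon_mon)
  qed
  show ?thesis
  proof (cases "\<beta> = []")
    case True then show ?thesis using 1 by simp
  next
    case False
    have "pmul (psub (mon (\<alpha> @ x)) (mon (\<alpha> @ y))) (mon \<beta>) \<in> J" using 1 assms False by (intro J_rmul gp_mon) auto
    then show ?thesis by (simp add: pmul_psub_left pmul_mon_mon)
  qed
qed

lemma J_ctx_mon:
  assumes "mon x \<in> J" "\<forall>v\<in>set \<alpha>. fst v \<in> carrier G" "\<forall>v\<in>set \<beta>. fst v \<in> carrier G"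
  shows "mon (\<alpha> @ x @ \<beta>) \<in> J"
proof -
  have 1: "mon (\<alpha> @ x) \<in> J"
  proof (cases "\<alpha> = []")
    case True then show ?thesis using assms by simp
  next
    case False
    have "pmul (mon \<alpha>) (mon x) \<in> J" using assms False by (intro J_lmul gp_mon) auto
    then show ?thesis by (simp add: pmul_mon_mon)
  qed
  show ?thesis
  proof (cases "\<beta> = []")
    case True then show ?thesis using 1 by simp
  next
    case False
    have "pmul (mon (\<alpha> @ x)) (mon \<beta>) \<in> J" using 1 assms False by (intro J_rmul gp_mon) auto
    then show ?thesis by (simp add: pmul_mon_mon)
  qed
qed

lemma move1:
  assumes u1: "wk a u1 = Some a" "u1 \<noteq> []" and u2: "wk a u2 = Some a" "u2 \<noteq> []"
    and al: "\<forall>v\<in>set \<alpha>. fst v \<in> carrier G" and be: "\<forall>v\<in>set \<beta>. fst v \<in> carrier G"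
  shows "psub (mon (\<alpha> @ u1 @ u2 @ \<beta>)) (mon (\<alpha> @ u2 @ u1 @ \<beta>)) \<in> J"
proof -
  have "(a,a) \<in> S" using wd_Some_S u1 by auto
  then have "nx a \<one> = Some a" using gsc by (simp add: nx_Some)
  then have gen: "psub (mon [(\<one>,1),(\<one>,2)]) (mon [(\<one>,2),(\<one>,1)]) \<in> J"
    using G1 Bc_nz by blast
  define f where "f = (\<lambda>v. if v = (\<one>,1::nat) then u1 else if v = (\<one>,2) then u2 else [v])"
  have d1: "gprod G (map fst u1) = \<one>" using wd_Some_deg[OF u1(1)] gsc by simp
  have d2: "gprod G (map fst u2) = \<one>" using wd_Some_deg[OF u2(1)] gsc by simp
  have gsub: "graded_subst G (\<lambda>v. mon (f v) :: ('g,'f) gpoly)"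
    by (rule gsub_mon) (use u1 u2 d1 d2 wk_carr in \<open>auto simp: f_def\<close>)
  have "psubst (\<lambda>v. mon (f v)) (psub (mon [(\<one>,1),(\<one>,2)]) (mon [(\<one>,2),(\<one>,1)])) \<in> J"
    by (rule J_subst[OF gen gsub])
  then have "psub (mon (u1 @ u2)) (mon (u2 @ u1)) \<in> J"
    by (subst (asm) psubst_psub_mon) (auto simp: f_def)
  from J_ctx_psub[OF this al be] show ?thesis by simp
qed

lemma move2:
  assumes ab: "a \<noteq> b" and u1: "wk a u1 = Some b" "u1 \<noteq> []" and u2: "wk b u2 = Some a"
    and u3: "wk a u3 = Some b"
    and al: "\<forall>v\<in>set \<alpha>. fst v \<in> carrier G" and be: "\<forall>v\<in>set \<beta>. fst v \<in> carrier G"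
  shows "psub (mon (\<alpha> @ u1 @ u2 @ u3 @ \<beta>)) (mon (\<alpha> @ u3 @ u2 @ u1 @ \<beta>)) \<in> J"
proof -
  define h where "h = inv (gs a) \<otimes> gs b"
  have hc: "h \<in> carrier G" using gsc by (simp add: h_def)
  have "(a,b) \<in> S" using wd_Some_S u1 by auto
  then have nxh: "nx a h = Some b" by (simp add: nx_Some h_def)
  have h1: "h \<noteq> \<one>"
  proof
    assume "h = \<one>"
    then have "inv (gs a) \<otimes> gs b = inv (gs a) \<otimes> gs a" using gsc by (simp add: h_def)
    then have "gs b = gs a" using inv_mult_eq_cancel gsc by blast
    then show False using ab ginj by (metis injD)
  qed
  have gen: "psub (mon [(h,1),(inv h,2),(h,3)]) (mon [(h,3),(inv h,2),(h,1)]) \<in> J"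
    using G2[OF hc h1] Bc_nz[OF nxh] by blast
  define f where "f = (\<lambda>v. if v = (h,1::nat) then u1 else if v = (inv h,2) then u2 else if v = (h,3) then u3 else [v])"
  have d1: "gprod G (map fst u1) = h" using wd_Some_deg[OF u1(1)] by (simp add: h_def)
  have d3: "gprod G (map fst u3) = h" using wd_Some_deg[OF u3] by (simp add: h_def)
  have d2: "gprod G (map fst u2) = inv h"
    using wd_Some_deg[OF u2] gsc by (simp add: h_def inv_mult_group)
  have u2ne: "u2 \<noteq> []" using u2 ab by auto
  have u3ne: "u3 \<noteq> []" using u3 ab by auto
  have gsub: "graded_subst G (\<lambda>v. mon (f v) :: ('g,'f) gpoly)"
    by (rule gsub_mon) (use u1 u2ne u3ne d1 d2 d3 u2 u3 wk_carr in \<open>auto simp: f_def\<close>)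
  have "psubst (\<lambda>v. mon (f v)) (psub (mon [(h,1),(inv h,2),(h,3)]) (mon [(h,3),(inv h,2),(h,1)])) \<in> J"
    by (rule J_subst[OF gen gsub])
  then have "psub (mon (u1 @ u2 @ u3)) (mon (u3 @ u2 @ u1)) \<in> J"
    by (subst (asm) psubst_psub_mon) (auto simp: f_def)
  from J_ctx_psub[OF this al be] show ?thesis by simp
qed

lemma L2:
  "wk a w \<noteq> None \<Longrightarrow> wk a w' \<noteq> None \<Longrightarrow> ce a w = ce a w' \<Longrightarrow> w \<noteq> [] \<Longrightarrow> psub (mon w) (mon w') \<in> J"
proof (induction "length w" arbitrary: a w w' rule: less_induct)
  case less
  have same: "psub (mon w1) (mon w2) \<in> J"
    if s: "length w1 = length w" "wk a1 w1 \<noteq> None" "wk a1 w2 \<noteq> None" "ce a1 w1 = ce a1 w2" "w1 \<noteq> []" "hd w1 = hd w2"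
    for a1 w1 w2
  proof -
    have len: "length w1 = length w2" using size_ce[OF s(2)] size_ce[OF s(3)] s(4) by simp
    obtain l r1 where w1: "w1 = l # r1" using s(5) by (cases w1) auto
    then obtain r2 where w2: "w2 = l # r2" using len s(6) by (cases w2) auto
    obtain b where b: "nx a1 (fst l) = Some b" using s(2) w1 by (auto split: option.splits)
    have r1: "wk b r1 \<noteq> None" and r2: "wk b r2 \<noteq> None" and cer: "ce b r1 = ce b r2"
      using s(2,3,4) w1 w2 b by auto
    have lc: "fst l \<in> carrier G" using nx_carr[OF b] .
    show ?thesis
    proof (cases "r1 = []")
      case True
      then have "r2 = []" using len w1 w2 by simp
      then show ?thesis using True w1 w2 J_pzero by (simp add: psub_self)
    next
      case False
      have "psub (mon r1) (mon r2) \<in> J"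
        using less.hyps[of r1 b r2] s(1) w1 r1 r2 cer False by simp
      from J_ctx_psub[OF this, of "[l]" "[]"] lc show ?thesis using w1 w2 by simp
    qed
  qed
  obtain l r where w: "w = l # r" using less.prems(4) by (cases w) auto
  have lenw': "length w' = length w" using size_ce[OF less.prems(1)] size_ce[OF less.prems(2)] less.prems(3) by simp
  then obtain l' r' where w': "w' = l' # r'" using w by (cases w') auto
  show ?case
  proof (cases "l = l'")
    case True
    then show ?thesis using same[of w a w'] less.prems w w' by simp
  next
    case False
    obtain d' where d': "nx a (fst l') = Some d'" using less.prems(2) w' by (auto split: option.splits)
    have "(l',a,d') \<in># ce a w'" using w' d' by simp
    then have "(l',a,d') \<in># ce a w" using less.prems(3) by simp
    from ce_split[OF this] obtain P \<beta> where wsplit: "w = P @ l' # \<beta>" and Pa: "wk a P = Some a" by auto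
    define Q where "Q = l' # \<beta>"
    have Pne: "P \<noteq> []" using wsplit w False by auto
    have Qv: "wk a Q \<noteq> None" using less.prems(1) Pa wsplit by (simp add: Q_def wd_append)
    have cew: "ce a w = ce a P + ce a Q" using ce_append[OF Pa] wsplit by (simp add: Q_def)
    define V where "V = (\<lambda>x. fst (snd x)) ` set_mset (ce a P)"
    obtain m0 P0 where P0: "P = m0 # P0" using Pne by (cases P) auto
    obtain e0 where e0: "nx a (fst m0) = Some e0" using Pa P0 by (auto split: option.splits)
    have m0ce: "(m0, a, e0) \<in># ce a P" using P0 e0 by simp
    have aV: "a \<in> V" using m0ce unfolding V_def by force
    have carw: "\<forall>v\<in>set w. fst v \<in> carrier G" using less.prems(1) wk_carr by blast
    show ?thesis
    proof (cases "\<exists>x\<in>#ce a Q. snd (snd x) \<in> V")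
      case True
      then obtain x where x: "x \<in># ce a Q" "snd (snd x) \<in> V" by blast
      from ce_split[OF x(1)] obtain u v where Qs: "Q = u @ fst x # v" and us: "wk a u = Some (fst (snd x))"
        and mt: "nx (fst (snd x)) (fst (fst x)) = Some (snd (snd x))" by blast
      define t where "t = snd (snd x)"
      define u3 where "u3 = u @ [fst x]"
      have u3w: "wk a u3 = Some t" using us mt by (simp add: u3_def t_def wd_append)
      have u3ne: "u3 \<noteq> []" by (simp add: u3_def)
      have hdu3: "hd u3 = l'" using Qs by (cases u) (auto simp: u3_def Q_def)
      have Qu3: "Q = u3 @ v" using Qs by (simp add: u3_def)
      obtain y where y: "y \<in># ce a P" "fst (snd y) = t" using x(2) unfolding V_def t_def by auto
      from ce_split[OF y(1)] obtain u1 v' where Ps: "P = u1 @ fst y # v'" and u1w: "wk a u1 = Some t"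
        using y(2) by auto
      define u2 where "u2 = fst y # v'"
      have u2w: "wk t u2 = Some a" using Pa Ps u1w by (simp add: u2_def wd_append)
      have Pu: "P = u1 @ u2" using Ps by (simp add: u2_def)
      have ww: "w = P @ u3 @ v" using wsplit Qu3 by (simp add: Q_def)
      have vcar: "\<forall>v'\<in>set v. fst v' \<in> carrier G" using carw ww by auto
      obtain w'' where w''J: "psub (mon w) (mon w'') \<in> J" and w''hd: "hd w'' = l'"
        and w''len: "length w'' = length w" and w''v: "wk a w'' \<noteq> None" and w''ce: "ce a w'' = ce a w"
      proof (cases "t = a")
        case True
        have "psub (mon ([] @ P @ u3 @ v)) (mon ([] @ u3 @ P @ v)) \<in> J"
          by (rule move1) (use Pa Pne u3w u3ne True vcar in auto)
        moreover have "hd (u3 @ P @ v) = l'" using hdu3 u3ne by simp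
        moreover have "length (u3 @ P @ v) = length w" using ww by simp
        moreover have "wk a (u3 @ P @ v) \<noteq> None" "ce a (u3 @ P @ v) = ce a w"
        proof -
          obtain z where z: "wk a v = Some z" using less.prems(1) ww Pa u3w True by (auto simp: wd_append split: option.splits)
          have "wk a (u3 @ P @ v) = Some z" using u3w Pa z True by (simp add: wd_append)
          then show "wk a (u3 @ P @ v) \<noteq> None" by simp
          have "ce a (u3 @ P @ v) = ce a u3 + (ce a P + ce a v)"
            using ce_append[OF u3w[unfolded True]] ce_append[OF Pa] by simp
          moreover have "ce a w = ce a P + (ce a u3 + ce a v)"
            using ww ce_append[OF Pa] ce_append[OF u3w[unfolded True]] by simp
          ultimately show "ce a (u3 @ P @ v) = ce a w" by (simp add: ac_simps)
        qed
        ultimately show ?thesis using that ww by simp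
      next
        case tne: False
        have u1ne: "u1 \<noteq> []" using u1w tne by auto
        have "psub (mon ([] @ u1 @ u2 @ u3 @ v)) (mon ([] @ u3 @ u2 @ u1 @ v)) \<in> J"
          by (rule move2) (use tne u1w u1ne u2w u3w vcar in auto)
        moreover have "hd (u3 @ u2 @ u1 @ v) = l'" using hdu3 u3ne by simp
        moreover have "length (u3 @ u2 @ u1 @ v) = length w" using ww Pu by simp
        moreover have "wk a (u3 @ u2 @ u1 @ v) \<noteq> None" "ce a (u3 @ u2 @ u1 @ v) = ce a w"
        proof -
          have wpu: "w = u1 @ u2 @ u3 @ v" using ww Pu by simp
          obtain z where z: "wk t v = Some z" using less.prems(1) wpu u1w u2w u3w
            by (auto simp: wd_append split: option.splits)
          have "wk a (u3 @ u2 @ u1 @ v) = Some z" using u3w u2w u1w z by (simp add: wd_append)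
          then show "wk a (u3 @ u2 @ u1 @ v) \<noteq> None" by simp
          have u21: "wk t (u2 @ u1) = Some t" using u2w u1w by (simp add: wd_append)
          have u12: "wk a (u1 @ u2) = Some a" using u2w u1w by (simp add: wd_append)
          have "ce a (u3 @ u2 @ u1 @ v) = ce a u3 + (ce t u2 + (ce a u1 + ce t v))"
            using ce_append[OF u3w] ce_append[OF u2w] ce_append[OF u1w] by simp
          moreover have "ce a w = ce a u1 + (ce t u2 + (ce a u3 + ce t v))"
            using wpu ce_append[OF u3w] ce_append[OF u2w] ce_append[OF u1w] by simp
          ultimately show "ce a (u3 @ u2 @ u1 @ v) = ce a w" by (simp add: ac_simps)
        qed
        ultimately show ?thesis using that by (simp add: ww Pu)
      qed
      have "psub (mon w'') (mon w') \<in> J"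
        using same[of w'' a w'] w''len w''v less.prems w''ce w''hd w' by (cases w'') auto
      from J_padd[OF w''J this] show ?thesis by (simp add: padd_psub_trans)
    next
      case False
      then have noV: "\<forall>x\<in>#ce a Q. snd (snd x) \<notin> V" by blast
      have ceQ: "ce a Q = add_mset (l',a,d') (ce d' \<beta>)" using d' by (simp add: Q_def)
      have d'V: "d' \<notin> V" using noV ceQ by auto
      have cew': "ce a w' = add_mset (l',a,d') (ce d' r')" using d' w' by simp
      have cer': "ce d' r' = ce a P + ce d' \<beta>" using cew cew' ceQ less.prems(3) by simp
      have r'v: "wk d' r' \<noteq> None" using less.prems(2) w' d' by simp
      have "\<forall>x\<in>#ce d' r'. fst (snd x) \<notin> V"
      proof (rule ce_inv[OF r'v d'V subset_mset.order_refl])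
        fix x assume x: "x \<in># ce d' r'" "fst (snd x) \<notin> V"
        then have "x \<notin># ce a P" unfolding V_def by force
        then have "x \<in># ce d' \<beta>" using x cer' by simp
        then have "x \<in># ce a Q" using ceQ by simp
        then show "snd (snd x) \<notin> V" using noV by blast
      qed
      moreover have "(m0,a,e0) \<in># ce d' r'" using m0ce cer' by simp
      ultimately show ?thesis using aV by force
    qed
  qed
qed

end



context gset begin

definition R :: "'n set \<Rightarrow> 'g list \<Rightarrow> 'n set" where
  "R D hs = {c. \<exists>a\<in>D. wd a hs = Some c}"

lemma R_Nil[simp]: "R D [] = D" by (auto simp: R_def)

lemma R_append: "R D (xs @ ys) = R (R D xs) ys"
  by (auto simp: R_def wd_append split: option.splits)

lemma R_image: "R D hs = (\<lambda>a. the (wd a hs)) ` {a\<in>D. wd a hs \<noteq> None}"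
proof (intro equalityI subsetI)
  fix c assume "c \<in> R D hs"
  then obtain a where "a \<in> D" "wd a hs = Some c" by (auto simp: R_def)
  then show "c \<in> (\<lambda>a. the (wd a hs)) ` {a\<in>D. wd a hs \<noteq> None}" by (intro image_eqI[of _ _ a]) auto
next
  fix c assume "c \<in> (\<lambda>a. the (wd a hs)) ` {a\<in>D. wd a hs \<noteq> None}"
  then show "c \<in> R D hs" by (auto simp: R_def)
qed

lemma card_R_le: "card (R D hs) \<le> card D"
proof -
  have "card (R D hs) \<le> card {a\<in>D. wd a hs \<noteq> None}" unfolding R_image by (rule card_image_le) simp
  also have "\<dots> \<le> card D" by (rule card_mono) auto
  finally show ?thesis .
qed

lemma card_R_lt: "c0 \<in> D \<Longrightarrow> wd c0 hs = None \<Longrightarrow> card (R D hs) < card D"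
proof -
  assume c0: "c0 \<in> D" "wd c0 hs = None"
  have "card (R D hs) \<le> card {a\<in>D. wd a hs \<noteq> None}" unfolding R_image by (rule card_image_le) simp
  also have "\<dots> < card D"
  proof (rule psubset_card_mono)
    show "{a\<in>D. wd a hs \<noteq> None} \<subset> D" using c0 by blast
  qed simp
  finally show ?thesis .
qed

lemma R_total_UNIV: "(\<forall>c. wd c hs \<noteq> None) \<Longrightarrow> R UNIV hs = UNIV"
proof -
  assume t: "\<forall>c. wd c hs \<noteq> None"
  have "inj_on (\<lambda>a. the (wd a hs)) {a\<in>UNIV. wd a hs \<noteq> None}"
  proof (rule inj_onI)
    fix a a' assume "a \<in> {a\<in>UNIV. wd a hs \<noteq> None}" "a' \<in> {a\<in>UNIV. wd a hs \<noteq> None}"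
      "the (wd a hs) = the (wd a' hs)"
    then obtain c where c1: "wd a hs = Some c" and c2: "wd a' hs = Some c" by auto
    show "a = a'" by (rule wd_inj[OF c1 c2])
  qed
  then have "card (R UNIV hs) = card {a\<in>UNIV. wd a hs \<noteq> None}" unfolding R_image by (rule card_image)
  also have "{a\<in>UNIV. wd a hs \<noteq> None} = UNIV" using t by blast
  finally have "card (R UNIV hs) = card (UNIV :: 'n set)" .
  then show ?thesis by (intro card_subset_eq) auto
qed

lemma R_single: "(\<forall>c\<in>D. wd c hs \<noteq> None) \<Longrightarrow> hs \<noteq> [] \<Longrightarrow> R D [gprod G hs] = R D hs"
proof -
  assume t: "\<forall>c\<in>D. wd c hs \<noteq> None" and ne: "hs \<noteq> []"
  have "wd c [gprod G hs] = wd c hs" if "c \<in> D" for c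
    using t that wd_single[OF _ ne] by fastforce
  then show ?thesis by (auto simp: R_def)
qed

definition degs :: "('g \<times> nat) list list \<Rightarrow> 'g list" where
  "degs bs = map (\<lambda>b. gprod G (map fst b)) bs"

lemma gprod_single: "h \<in> carrier G \<Longrightarrow> gprod G [h] = h" by simp

lemma DEC:
  assumes "\<forall>l\<in>set w. \<exists>c d. nx c (fst l) = Some d"
  shows "\<exists>x bs y. w = x @ concat bs @ y \<and>
    (\<forall>b\<in>set bs. b \<noteq> [] \<and> (\<exists>c d. nx c (gprod G (map fst b)) = Some d)) \<and>
    R UNIV (degs bs) = R UNIV (map fst (x @ concat bs)) \<and>
    (\<forall>c\<in>R UNIV (degs bs). wk c y \<noteq> None) \<and>
    (bs \<noteq> [] \<longrightarrow> length bs + 1 \<le> 2 * (card (UNIV :: 'n set) - card (R UNIV (degs bs))))"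
  using assms
proof (induction w rule: rev_induct)
  case Nil
  show ?case by (intro exI[of _ "[]"]) (simp add: degs_def)
next
  case (snoc l w)
  have pw: "\<forall>l\<in>set w. \<exists>c d. nx c (fst l) = Some d" using snoc.prems by simp
  from snoc.IH[OF pw] obtain x bs y where
    w: "w = x @ concat bs @ y" and
    bl: "\<forall>b\<in>set bs. b \<noteq> [] \<and> (\<exists>c d. nx c (gprod G (map fst b)) = Some d)" and
    rr: "R UNIV (degs bs) = R UNIV (map fst (x @ concat bs))" and
    yt: "\<forall>c\<in>R UNIV (degs bs). wk c y \<noteq> None" and
    ln: "bs \<noteq> [] \<longrightarrow> length bs + 1 \<le> 2 * (card (UNIV :: 'n set) - card (R UNIV (degs bs)))"
    by blast
  define Rc where "Rc = R UNIV (degs bs)"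
  obtain c1 d1 where lreal: "nx c1 (fst l) = Some d1" using snoc.prems by auto
  have lc: "fst l \<in> carrier G" using nx_carr[OF lreal] .
  have cardRc: "card Rc \<le> card (UNIV :: 'n set)" by (simp add: card_mono)
  show ?case
  proof (cases "\<forall>c\<in>Rc. wk c (y @ [l]) \<noteq> None")
    case True
    have ww: "w @ [l] = x @ concat bs @ (y @ [l])" using w by simp
    show ?thesis
      apply (rule exI[of _ x], rule exI[of _ bs], rule exI[of _ "y @ [l]"])
      using ww bl rr ln True unfolding Rc_def by blast
  next
    case False
    then obtain c0 where c0: "c0 \<in> Rc" "wk c0 (y @ [l]) = None" by auto
    show ?thesis
    proof (cases "bs = []")
      case True
      then have RcU: "Rc = UNIV" by (simp add: Rc_def degs_def)
      have RxU: "R UNIV (map fst x) = UNIV" using rr True by (simp add: degs_def)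
      have RyU: "R UNIV (map fst y) = UNIV" using yt True by (intro R_total_UNIV) (simp add: degs_def)
      have deg1: "degs [[l]] = [fst l]" using lc by (simp add: degs_def)
      have e1: "R UNIV (degs [[l]]) = R UNIV (map fst ((x @ y) @ concat [[l]]))"
        by (simp add: deg1 R_append RxU RyU)
      have "card (R UNIV (map fst (y @ [l]))) < card (UNIV :: 'n set)"
        by (rule card_R_lt[of c0]) (use c0 in auto)
      then have lt: "card (R UNIV (degs [[l]])) < card (UNIV :: 'n set)"
        by (simp add: deg1 R_append RyU)
      show ?thesis
        apply (rule exI[of _ "x @ y"], rule exI[of _ "[[l]]"], rule exI[of _ "[]"])
        using w True lreal lc e1 lt by (auto simp: deg1)
    next
      case bsne: False
      define yb where "yb = (if y = [] then [] else [y])"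
      define bs' where "bs' = bs @ yb @ [[l]]"
      have cc: "w @ [l] = x @ concat bs' @ []" using w by (auto simp: bs'_def yb_def)
      have ytot: "\<forall>c\<in>Rc. wk c y \<noteq> None" using yt by (simp add: Rc_def)
      have yreal: "y \<noteq> [] \<Longrightarrow> \<exists>c d. nx c (gprod G (map fst y)) = Some d"
      proof -
        assume yne: "y \<noteq> []"
        obtain d where "wk c0 y = Some d" using ytot c0 by auto
        from wd_single[OF this] yne have "wd c0 [gprod G (map fst y)] = Some d" by simp
        then show ?thesis by (auto split: option.splits)
      qed
      have bl': "\<forall>b\<in>set bs'. b \<noteq> [] \<and> (\<exists>c d. nx c (gprod G (map fst b)) = Some d)"
        using bl yreal lreal lc by (auto simp: bs'_def yb_def)
      have Ryb: "R Rc (degs yb) = R Rc (map fst y)"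
        using R_single[of Rc "map fst y"] ytot by (auto simp: yb_def degs_def)
      have e1: "R UNIV (degs bs') = R Rc (map fst (y @ [l]))"
        using Ryb lc by (simp add: bs'_def degs_def R_append Rc_def)
      have e2: "R UNIV (map fst (x @ concat bs')) = R Rc (map fst (y @ [l]))"
        using rr by (simp add: bs'_def yb_def R_append Rc_def)
      have lt: "card (R Rc (map fst (y @ [l]))) < card Rc"
        by (rule card_R_lt[of c0]) (use c0 in auto)
      have lbs: "length bs' \<le> length bs + 2" by (simp add: bs'_def yb_def)
      have ln': "length bs + 1 \<le> 2 * (card (UNIV :: 'n set) - card Rc)" using ln bsne by (simp add: Rc_def)
      have fin: "length bs' + 1 \<le> 2 * (card (UNIV :: 'n set) - card (R UNIV (degs bs')))"
        using lbs ln' lt cardRc unfolding e1 by linarith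
      show ?thesis
        apply (rule exI[of _ x], rule exI[of _ bs'], rule exI[of _ "[]"])
        using fin cc bl' e1 e2 by (simp add: bs'_def)
    qed
  qed
qed

end

context gJ begin

lemma mlmon_id:
  assumes "\<forall>c. wd c hs = None" "hs \<noteq> []" "set hs \<subseteq> carrier G"
  shows "mlmon hs \<in> graded_ids G (Bc :: 'g \<Rightarrow> ('f,'n) sqmat set)"
proof -
  define ws where "ws = zip hs [1..<length hs + 1]"
  have lu: "length hs = length [1..<length hs + 1]" by (simp only: length_upt)
  have mf: "map fst ws = hs" unfolding ws_def using map_fst_zip[OF lu] .
  have wsne: "ws \<noteq> []" using mf assms(2) by auto
  have wsc: "\<forall>v\<in>set ws. fst v \<in> carrier G" using assms(3) mf by force
  show ?thesis
    unfolding graded_ids_def mlmon_def ws_def[symmetric]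
  proof (intro CollectI conjI allI impI)
    show "is_gpoly G (mon ws :: ('g,'f) gpoly)" using gp_mon wsne wsc by blast
    show "peval \<sigma> (mon ws) = mzero" if sg: "\<forall>h i. h \<in> carrier G \<longrightarrow> \<sigma> (h, i) \<in> Bc h" for \<sigma> :: "'g \<times> nat \<Rightarrow> ('f,'n) sqmat"
    proof -
      have "mprod (map \<sigma> ws) a c = 0" for a c
      proof -
        have "mprod (map \<sigma> ws) a c = (if wk a ws = Some c then wt \<sigma> a ws else 0)"
        proof (rule PW)
          fix l a' b' assume "l \<in> set ws" "\<sigma> l a' b' \<noteq> 0"
          then show "nx a' (fst l) = Some b'" using sg wsc graded_Bc by (metis prod.collapse)
        qed
        then show ?thesis using assms(1) mf by simp
      qed
      then show ?thesis by (auto simp: peval_mon mzero_def)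
    qed
  qed
qed

lemma L1:
  assumes ne: "w \<noteq> []" and nv: "\<forall>c. wk c w = None" and wc: "\<forall>v\<in>set w. fst v \<in> carrier G"
  shows "mon w \<in> J"
proof (cases "\<exists>l\<in>set w. \<forall>c. nx c (fst l) = None")
  case True
  then obtain l where l: "l \<in> set w" "\<forall>c. nx c (fst l) = None" by blast
  from split_list[OF l(1)] obtain \<alpha> \<beta> where ws: "w = \<alpha> @ l # \<beta>" by blast
  define h where "h = fst l"
  have hc: "h \<in> carrier G" using wc l by (simp add: h_def)
  have "Bc h = {mzero :: ('f,'n) sqmat}" by (rule Bc_z) (use l in \<open>simp add: h_def\<close>)
  then have gen: "mon [(h,1)] \<in> J" using G3[OF hc] by blast
  define f where "f = (\<lambda>v. if v = (h, 1::nat) then [l] else [v])"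
  have gsub: "graded_subst G (\<lambda>v. mon (f v) :: ('g,'f) gpoly)"
    by (rule gsub_mon) (use hc in \<open>auto simp: f_def h_def\<close>)
  have "psubst (\<lambda>v. mon (f v)) (mon [(h,1)]) \<in> J" by (rule J_subst[OF gen gsub])
  then have "mon [l] \<in> J" by (simp add: psubst_mon f_def)
  from J_ctx_mon[OF this, of \<alpha> \<beta>] wc ws show ?thesis by auto
next
  case False
  then have real: "\<forall>l\<in>set w. \<exists>c d. nx c (fst l) = Some d" by (metis not_None_eq)
  from DEC[OF real] obtain x bs y where
    w: "w = x @ concat bs @ y" and
    bl: "\<forall>b\<in>set bs. b \<noteq> [] \<and> (\<exists>c d. nx c (gprod G (map fst b)) = Some d)" and
    rr: "R UNIV (degs bs) = R UNIV (map fst (x @ concat bs))" and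
    yt: "\<forall>c\<in>R UNIV (degs bs). wk c y \<noteq> None" and
    ln: "bs \<noteq> [] \<longrightarrow> length bs + 1 \<le> 2 * (card (UNIV :: 'n set) - card (R UNIV (degs bs)))"
    by blast
  define hs where "hs = degs bs"
  have Re: "R UNIV hs = {}"
  proof (rule ccontr)
    assume "R UNIV hs \<noteq> {}"
    then obtain c where c: "c \<in> R UNIV hs" by blast
    then obtain d where d: "wk c y = Some d" using yt by (auto simp: hs_def)
    from c rr obtain a where a: "wd a (map fst (x @ concat bs)) = Some c" by (auto simp: hs_def R_def)
    have "wk a w = Some d" using a d by (auto simp: w wd_append split: option.splits)
    then show False using nv by simp
  qed
  have bsne: "bs \<noteq> []" using Re by (auto simp: hs_def degs_def)
  have lhs: "length hs = length bs" by (simp add: hs_def degs_def)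
  have len1: "length hs + 1 \<le> 2 * card (UNIV :: 'n set)" using ln bsne Re lhs by (simp add: hs_def)
  have nohs: "\<forall>c. wd c hs = None"
  proof
    fix c show "wd c hs = None" using Re by (cases "wd c hs") (auto simp: R_def)
  qed
  have len2: "2 \<le> length hs"
  proof (rule ccontr)
    assume "\<not> 2 \<le> length hs"
    moreover have "length bs > 0" using bsne by simp
    ultimately have "length bs = 1" using lhs by linarith
    then obtain b where b: "bs = [b]" by (auto simp: length_Suc_conv)
    then obtain c d where "nx c (gprod G (map fst b)) = Some d" using bl by auto
    then have "wd c hs = Some d" by (simp add: hs_def degs_def b)
    then show False using nohs by simp
  qed
  have hsD: "set hs \<subseteq> Dset" using bl nx_Dset by (auto simp: hs_def degs_def)
  have hsC: "set hs \<subseteq> carrier G" using hsD Dset_carr by blast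
  have len3: "length hs \<le> 2 * card (UNIV :: 'n set) - 1" using len1 by linarith
  have hsne: "hs \<noteq> []" using len2 by auto
  have mlJ: "mlmon hs \<in> J"
    using G4[OF len2 len3 hsD mlmon_id[OF nohs hsne hsC]] .
  define f where "f = (\<lambda>v. if 1 \<le> snd v \<and> snd v \<le> length hs \<and> fst v = hs ! (snd v - 1) then bs ! (snd v - 1) else [v])"
  have wcb: "\<forall>v\<in>set (concat bs). fst v \<in> carrier G" using wc w by auto
  have gsub: "graded_subst G (\<lambda>v. mon (f v) :: ('g,'f) gpoly)"
  proof (rule gsub_mon)
    fix h i assume hc: "h \<in> carrier G"
    show "f (h,i) \<noteq> [] \<and> (\<forall>v\<in>set (f (h,i)). fst v \<in> carrier G) \<and> gprod G (map fst (f (h,i))) = h"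
    proof (cases "1 \<le> i \<and> i \<le> length hs \<and> h = hs ! (i - 1)")
      case True
      then have k: "i - 1 < length bs" using lhs by arith
      have bin: "bs ! (i - 1) \<in> set bs" using k by simp
      have "gprod G (map fst (bs ! (i - 1))) = hs ! (i - 1)" using k by (simp add: hs_def degs_def)
      then show ?thesis using True bin bl wcb by (auto simp: f_def)
    next
      case False then show ?thesis using hc by (auto simp: f_def)
    qed
  qed
  have "psubst (\<lambda>v. mon (f v)) (mlmon hs) \<in> J" by (rule J_subst[OF mlJ gsub])
  moreover have "map f (zip hs [1..<length hs + 1]) = bs"
    by (rule nth_equalityI) (auto simp del: upt_Suc simp: f_def lhs)
  ultimately have "mon (concat bs) \<in> J" by (simp add: mlmon_def psubst_mon)
  from J_ctx_mon[OF this, of x y] wc w show ?thesis by auto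
qed

end



lemma univ_poly_zero:
  fixes a :: "nat \<Rightarrow> 'f::field"
  assumes inf: "infinite (UNIV :: 'f set)" and K: "finite K"
    and z: "\<And>s. (\<Sum>k\<in>K. a k * s ^ k) = 0"
  shows "\<forall>k\<in>K. a k = 0"
proof -
  define p where "p = (\<Sum>k\<in>K. monom (a k) k)"
  have ev: "poly p s = (\<Sum>k\<in>K. a k * s ^ k)" for s by (simp add: p_def poly_sum poly_monom)
  have "p = 0"
  proof (rule ccontr)
    assume "p \<noteq> 0"
    then have "finite {s. poly p s = 0}" by (rule poly_roots_finite)
    moreover have "{s. poly p s = 0} = UNIV" using z ev by auto
    ultimately show False using inf by simp
  qed
  show ?thesis
  proof
    fix k assume k: "k \<in> K"
    have "coeff p k = (\<Sum>k'\<in>K. if k' = k then a k' else 0)"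
      by (simp add: p_def coeff_sum coeff_monom)
    also have "\<dots> = a k" using K k by simp
    finally show "a k = 0" using \<open>p = 0\<close> by simp
  qed
qed

lemma prod_mset_split:
  "(\<Prod>x\<in>#M. (t x :: 'f::comm_monoid_mult)) = t x0 ^ count M x0 * (\<Prod>x\<in>#filter_mset (\<lambda>y. y \<noteq> x0) M. t x)"
  by (induction M) (auto simp: mult_ac)

lemma indep_aux:
  fixes c :: "'x multiset \<Rightarrow> 'f::field"
  assumes inf: "infinite (UNIV :: 'f set)" and X: "finite X"
  shows "finite Ms \<Longrightarrow> (\<forall>M\<in>Ms. set_mset M \<subseteq> X) \<Longrightarrow> (\<forall>t. (\<Sum>M\<in>Ms. c M * (\<Prod>x\<in>#M. t x)) = 0) \<Longrightarrow> \<forall>M\<in>Ms. c M = 0"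
  using X
proof (induction X arbitrary: Ms c rule: finite_induct)
  case empty
  then have "Ms \<subseteq> {{#}}" by auto
  show ?case
  proof
    fix M assume M: "M \<in> Ms"
    then have Me: "M = {#}" using empty by auto
    have "Ms = {{#}}" using M Me \<open>Ms \<subseteq> {{#}}\<close> by auto
    then show "c M = 0" using empty.prems(3) Me by auto
  qed
next
  case (insert x0 X)
  let ?k = "\<lambda>M. count M x0"
  let ?r = "\<lambda>M. filter_mset (\<lambda>y. y \<noteq> x0) M"
  have fin: "finite Ms" by fact
  have key: "(\<Sum>M\<in>{M\<in>Ms. ?k M = j}. c M * (\<Prod>x\<in>#?r M. t x)) = 0" if j: "j \<in> ?k ` Ms" for j t
  proof -
    define C where "C = (\<lambda>j. \<Sum>M\<in>{M\<in>Ms. ?k M = j}. c M * (\<Prod>x\<in>#?r M. t x))"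
    have "(\<Sum>j\<in>?k ` Ms. C j * s ^ j) = 0" for s
    proof -
      let ?t = "t(x0 := s)"
      have r: "(\<Prod>x\<in>#?r M. ?t x) = (\<Prod>x\<in>#?r M. t x)" for M
        by (rule arg_cong[where f=prod_mset], rule image_mset_cong) auto
      have "0 = (\<Sum>M\<in>Ms. c M * (\<Prod>x\<in>#M. ?t x))" using insert.prems(3) by simp
      also have "\<dots> = (\<Sum>M\<in>Ms. c M * (s ^ ?k M * (\<Prod>x\<in>#?r M. t x)))"
      proof (rule sum.cong[OF refl])
        fix M
        show "c M * (\<Prod>x\<in>#M. ?t x) = c M * (s ^ ?k M * (\<Prod>x\<in>#?r M. t x))"
          using prod_mset_split[of ?t M x0] r[of M] by simp
      qed
      also have "\<dots> = (\<Sum>j\<in>?k ` Ms. \<Sum>M\<in>{M\<in>Ms. ?k M = j}. c M * (s ^ ?k M * (\<Prod>x\<in>#?r M. t x)))"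
        by (rule sum.group[symmetric]) (use fin in auto)
      also have "\<dots> = (\<Sum>j\<in>?k ` Ms. C j * s ^ j)"
      proof (rule sum.cong[OF refl])
        fix j assume "j \<in> ?k ` Ms"
        have "(\<Sum>M\<in>{M\<in>Ms. ?k M = j}. c M * (s ^ ?k M * (\<Prod>x\<in>#?r M. t x))) =
            (\<Sum>M\<in>{M\<in>Ms. ?k M = j}. s ^ j * (c M * (\<Prod>x\<in>#?r M. t x)))"
          by (rule sum.cong) (auto simp: mult_ac)
        then show "(\<Sum>M\<in>{M\<in>Ms. ?k M = j}. c M * (s ^ ?k M * (\<Prod>x\<in>#?r M. t x))) = C j * s ^ j"
          by (simp add: C_def sum_distrib_left mult_ac)
      qed
      finally show ?thesis by simp
    qed
    then have "\<forall>j\<in>?k ` Ms. C j = 0" by (intro univ_poly_zero[OF inf]) (use fin in auto)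
    then have "C j = 0" using j by blast
    then show ?thesis by (simp add: C_def)
  qed
  show ?case
  proof
    fix M0 assume M0: "M0 \<in> Ms"
    define j where "j = ?k M0"
    define Ms' where "Ms' = ?r ` {M\<in>Ms. ?k M = j}"
    define c' where "c' = (\<lambda>N. c (N + replicate_mset j x0))"
    have recon: "M = ?r M + replicate_mset j x0" if "M \<in> Ms" "?k M = j" for M
      using that by (intro multiset_eqI) (auto simp: count_replicate_mset)
    have inj: "inj_on ?r {M\<in>Ms. ?k M = j}"
    proof (rule inj_onI)
      fix M1 M2 assume m1: "M1 \<in> {M\<in>Ms. ?k M = j}" and m2: "M2 \<in> {M\<in>Ms. ?k M = j}" and e: "?r M1 = ?r M2"
      have a1: "M1 \<in> Ms" "?k M1 = j" and a2: "M2 \<in> Ms" "?k M2 = j" using m1 m2 by auto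
      have "M1 = ?r M1 + replicate_mset j x0" by (rule recon[OF a1])
      also have "\<dots> = ?r M2 + replicate_mset j x0" using e by simp
      also have "\<dots> = M2" by (rule recon[OF a2, symmetric])
      finally show "M1 = M2" .
    qed
    have "\<forall>N\<in>Ms'. c' N = 0"
    proof (rule insert.IH)
      show "finite Ms'" using fin by (simp add: Ms'_def)
      show "\<forall>N\<in>Ms'. set_mset N \<subseteq> X"
        using insert.prems(2) by (auto simp: Ms'_def)
      show "\<forall>t. (\<Sum>N\<in>Ms'. c' N * (\<Prod>x\<in>#N. t x)) = 0"
      proof
        fix t
        have "(\<Sum>N\<in>Ms'. c' N * (\<Prod>x\<in>#N. t x)) = (\<Sum>M\<in>{M\<in>Ms. ?k M = j}. c' (?r M) * (\<Prod>x\<in>#?r M. t x))"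
          unfolding Ms'_def by (rule sum.reindex[OF inj, unfolded comp_def])
        also have "\<dots> = (\<Sum>M\<in>{M\<in>Ms. ?k M = j}. c M * (\<Prod>x\<in>#?r M. t x))"
          by (intro sum.cong refl) (auto simp: c'_def recon[symmetric])
        also have "\<dots> = 0" using key[of j t] M0 by (simp add: j_def)
        finally show "(\<Sum>N\<in>Ms'. c' N * (\<Prod>x\<in>#N. t x)) = 0" .
      qed
    qed
    moreover have "?r M0 \<in> Ms'" using M0 by (simp add: Ms'_def j_def)
    ultimately have "c' (?r M0) = 0" by blast
    then show "c M0 = 0" using recon[OF M0] by (simp add: c'_def j_def)
  qed
qed

lemma indep:
  fixes c :: "'x multiset \<Rightarrow> 'f::field"
  assumes inf: "infinite (UNIV :: 'f set)" and fin: "finite Ms"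
    and z: "\<And>t. (\<Sum>M\<in>Ms. c M * (\<Prod>x\<in>#M. t x)) = 0"
  shows "\<forall>M\<in>Ms. c M = 0"
  by (rule indep_aux[OF inf _ fin, of "\<Union>M\<in>Ms. set_mset M"]) (use fin z in auto)




context gset begin

lemma ce_edge: "x \<in># ce a w \<Longrightarrow> nx (fst (snd x)) (fst (fst x)) = Some (snd (snd x))"
  using ce_split by blast

lemma L3:
  assumes inf: "infinite (UNIV :: 'f::field set)"
    and p: "p \<in> graded_ids G (Bc :: 'g \<Rightarrow> ('f,'n) sqmat set)"
    and w0: "w0 \<in> supp p" "wk a w0 \<noteq> None"
  shows "(\<Sum>w\<in>{w\<in>supp p. wk a w \<noteq> None \<and> ce a w = ce a w0}. p w) = 0"
proof -
  have fp: "finite (supp p)" using p by (auto simp: graded_ids_def is_gpoly_def)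
  define W where "W = {w\<in>supp p. wk a w \<noteq> None}"
  have fW: "finite W" using fp by (simp add: W_def)
  have Z: "(\<Sum>w\<in>W. p w * (\<Prod>x\<in>#ce a w. t x)) = 0" for t :: "('g \<times> nat) \<times> 'n \<times> 'n \<Rightarrow> 'f"
  proof -
    define \<sigma> :: "'g \<times> nat \<Rightarrow> ('f,'n) sqmat" where
      "\<sigma> = (\<lambda>l i j. if nx i (fst l) = Some j then t (l,i,j) else 0)"
    have sg: "\<forall>h i. h \<in> carrier G \<longrightarrow> \<sigma> (h,i) \<in> Bc h" by (auto simp: \<sigma>_def Bc_iff)
    have gr: "\<And>l a' b'. \<sigma> l a' b' \<noteq> 0 \<Longrightarrow> nx a' (fst l) = Some b'"
      by (auto simp: \<sigma>_def split: if_splits)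
    have "peval \<sigma> p = mzero" using p sg by (auto simp: graded_ids_def)
    have e0: "(\<Sum>w\<in>supp p. p w * mprod (map \<sigma> w) a j) = 0" for j
    proof -
      have "peval \<sigma> p a j = 0" using \<open>peval \<sigma> p = mzero\<close> by (simp add: mzero_def)
      then show ?thesis by (simp add: peval_def)
    qed
    have "0 = (\<Sum>j\<in>UNIV. \<Sum>w\<in>supp p. p w * mprod (map \<sigma> w) a j)" using e0 by simp
    also have "\<dots> = (\<Sum>w\<in>supp p. \<Sum>j\<in>UNIV. p w * mprod (map \<sigma> w) a j)"
      by (rule sum.swap)
    also have "\<dots> = (\<Sum>w\<in>supp p. if wk a w \<noteq> None then p w * (\<Prod>x\<in>#ce a w. t x) else 0)"
    proof (rule sum.cong[OF refl])
      fix w assume "w \<in> supp p"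
      have pw: "mprod (map \<sigma> w) a j = (if wk a w = Some j then wt \<sigma> a w else 0)" for j
        by (rule PW) (rule gr)
      show "(\<Sum>j\<in>UNIV. p w * mprod (map \<sigma> w) a j) = (if wk a w \<noteq> None then p w * (\<Prod>x\<in>#ce a w. t x) else 0)"
      proof (cases "wk a w")
        case None then show ?thesis by (simp add: pw)
      next
        case (Some e)
        have "(\<Sum>j\<in>UNIV. p w * mprod (map \<sigma> w) a j) = p w * mprod (map \<sigma> w) a e"
          by (rule sum_UNIV_single) (simp add: pw Some)
        also have "\<dots> = p w * wt \<sigma> a w" by (simp add: pw Some)
        also have "wt \<sigma> a w = (\<Prod>x\<in>#ce a w. \<sigma> (fst x) (fst (snd x)) (snd (snd x)))"
          using Some by (simp add: wt_ce)
        also have "\<dots> = (\<Prod>x\<in>#ce a w. t x)"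
        proof (rule arg_cong[where f=prod_mset], rule image_mset_cong)
          fix x assume "x \<in># ce a w"
          then have "nx (fst (snd x)) (fst (fst x)) = Some (snd (snd x))" by (rule ce_edge)
          then show "\<sigma> (fst x) (fst (snd x)) (snd (snd x)) = t x" by (simp add: \<sigma>_def)
        qed
        finally show ?thesis using Some by simp
      qed
    qed
    also have "\<dots> = (\<Sum>w\<in>W. p w * (\<Prod>x\<in>#ce a w. t x))"
      unfolding W_def using fp by (simp add: sum.inter_filter)
    finally show ?thesis by simp
  qed
  define c where "c = (\<lambda>M. \<Sum>w\<in>{w\<in>W. ce a w = M}. p w)"
  have "\<forall>M\<in>ce a ` W. c M = 0"
  proof (rule indep[OF inf])
    show "finite (ce a ` W)" using fW by simp
    fix t :: "('g \<times> nat) \<times> 'n \<times> 'n \<Rightarrow> 'f"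
    have "(\<Sum>M\<in>ce a ` W. c M * (\<Prod>x\<in>#M. t x)) = (\<Sum>M\<in>ce a ` W. \<Sum>w\<in>{w\<in>W. ce a w = M}. p w * (\<Prod>x\<in>#ce a w. t x))"
      by (rule sum.cong[OF refl]) (auto simp: c_def sum_distrib_right intro!: sum.cong)
    also have "\<dots> = (\<Sum>w\<in>W. p w * (\<Prod>x\<in>#ce a w. t x))"
      by (rule sum.group) (use fW in auto)
    finally show "(\<Sum>M\<in>ce a ` W. c M * (\<Prod>x\<in>#M. t x)) = 0" using Z by simp
  qed
  moreover have "ce a w0 \<in> ce a ` W" using w0 by (auto simp: W_def)
  ultimately have "c (ce a w0) = 0" by blast
  moreover have "{w\<in>W. ce a w = ce a w0} = {w\<in>supp p. wk a w \<noteq> None \<and> ce a w = ce a w0}"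
    by (auto simp: W_def)
  ultimately show ?thesis by (simp add: c_def)
qed

lemma graded_all:
  "(\<forall>h i. h \<in> carrier G \<longrightarrow> \<sigma> (h,i) \<in> Bc h) \<Longrightarrow> fst l \<in> carrier G \<Longrightarrow> \<sigma> l a b \<noteq> 0 \<Longrightarrow> nx a (fst l) = Some b"
  by (cases l) (auto intro: graded_Bc)

lemma nx_one: "nx a \<one> = Some b \<Longrightarrow> b = a"
proof -
  assume "nx a \<one> = Some b"
  then have "inv (gs a) \<otimes> gs b = inv (gs a) \<otimes> gs a" using gsc by (simp add: nx_Some)
  then have "gs b = gs a" using inv_mult_eq_cancel gsc by blast
  then show "b = a" using ginj by (meson injD)
qed

lemma nx_inv: "nx a h = Some b \<Longrightarrow> nx b (inv h) = Some c \<Longrightarrow> c = a"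
proof -
  assume 1: "nx a h = Some b" and 2: "nx b (inv h) = Some c"
  have "inv (gs b) \<otimes> gs c = inv (inv (gs a) \<otimes> gs b)" using 1 2 by (simp add: nx_Some)
  also have "\<dots> = inv (gs b) \<otimes> gs a" using gsc by (simp add: inv_mult_group)
  finally have "gs c = gs a" using inv_mult_eq_cancel gsc by blast
  then show "c = a" using ginj by (meson injD)
qed

lemma peval_psub_mon: "peval \<sigma> (psub (mon w1) (mon w2)) = (\<lambda>i j. mprod (map \<sigma> w1) i j - mprod (map \<sigma> w2) i j)"
  by (simp add: peval_psub peval_mon)

lemma gp_psub_mon: "w1 \<noteq> [] \<Longrightarrow> w2 \<noteq> [] \<Longrightarrow> \<forall>v\<in>set w1. fst v \<in> carrier G \<Longrightarrow> \<forall>v\<in>set w2. fst v \<in> carrier G \<Longrightarrow>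
  is_gpoly G (psub (mon w1) (mon w2) :: ('g,'f::field) gpoly)"
  by (intro gp_psub gp_mon)

lemma gen1: "psub (mon [(\<one>,1),(\<one>,2)]) (mon [(\<one>,2),(\<one>,1)]) \<in> graded_ids G (Bc :: 'g \<Rightarrow> ('f::field,'n) sqmat set)"
  unfolding graded_ids_def
proof (intro CollectI conjI allI impI)
  show "is_gpoly G (psub (mon [(\<one>,1),(\<one>,2)]) (mon [(\<one>,2),(\<one>,1)]) :: ('g,'f) gpoly)"
    by (rule gp_psub_mon) auto
  show "peval \<sigma> (psub (mon [(\<one>,1),(\<one>,2)]) (mon [(\<one>,2),(\<one>,1)])) = mzero"
    if sg: "\<forall>h i. h \<in> carrier G \<longrightarrow> \<sigma> (h, i) \<in> Bc h" for \<sigma> :: "'g \<times> nat \<Rightarrow> ('f,'n) sqmat"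
  proof -
    have gr: "\<And>l a' b'. l \<in> set [(\<one>,1::nat),(\<one>,2)] \<Longrightarrow> \<sigma> l a' b' \<noteq> 0 \<Longrightarrow> nx a' (fst l) = Some b'"
      by (rule graded_all[OF sg]) auto
    have gr2: "\<And>l a' b'. l \<in> set [(\<one>,2::nat),(\<one>,1)] \<Longrightarrow> \<sigma> l a' b' \<noteq> 0 \<Longrightarrow> nx a' (fst l) = Some b'"
      by (rule graded_all[OF sg]) auto
    have "mprod (map \<sigma> [(\<one>,1),(\<one>,2)]) i j = mprod (map \<sigma> [(\<one>,2),(\<one>,1)]) i j" for i j
    proof -
      have e1: "mprod (map \<sigma> [(\<one>,1::nat),(\<one>,2)]) i j = (if wk i [(\<one>,1::nat),(\<one>,2)] = Some j then wt \<sigma> i [(\<one>,1::nat),(\<one>,2)] else 0)"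
        by (rule PW) (rule gr)
      have e2: "mprod (map \<sigma> [(\<one>,2::nat),(\<one>,1)]) i j = (if wk i [(\<one>,2::nat),(\<one>,1)] = Some j then wt \<sigma> i [(\<one>,2::nat),(\<one>,1)] else 0)"
        by (rule PW) (rule gr2)
      have "wt \<sigma> i [(\<one>,1::nat),(\<one>,2)] = wt \<sigma> i [(\<one>,2::nat),(\<one>,1)]"
        by (auto split: option.splits dest!: nx_one simp: mult_ac)
      then show ?thesis unfolding e1 e2 by simp
    qed
    then show ?thesis by (simp add: peval_psub_mon mzero_def)
  qed
qed

lemma gen2:
  assumes hc: "h \<in> carrier G"
  shows "psub (mon [(h,1),(inv h,2),(h,3)]) (mon [(h,3),(inv h,2),(h,1)]) \<in> graded_ids G (Bc :: 'g \<Rightarrow> ('f::field,'n) sqmat set)"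
  unfolding graded_ids_def
proof (intro CollectI conjI allI impI)
  show "is_gpoly G (psub (mon [(h,1),(inv h,2),(h,3)]) (mon [(h,3),(inv h,2),(h,1)]) :: ('g,'f) gpoly)"
    by (rule gp_psub_mon) (use hc in auto)
  show "peval \<sigma> (psub (mon [(h,1),(inv h,2),(h,3)]) (mon [(h,3),(inv h,2),(h,1)])) = mzero"
    if sg: "\<forall>h i. h \<in> carrier G \<longrightarrow> \<sigma> (h, i) \<in> Bc h" for \<sigma> :: "'g \<times> nat \<Rightarrow> ('f,'n) sqmat"
  proof -
    have gr: "\<And>l a' b'. l \<in> set [(h,1::nat),(inv h,2),(h,3)] \<Longrightarrow> \<sigma> l a' b' \<noteq> 0 \<Longrightarrow> nx a' (fst l) = Some b'"
      by (rule graded_all[OF sg]) (use hc in auto)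
    have gr2: "\<And>l a' b'. l \<in> set [(h,3::nat),(inv h,2),(h,1)] \<Longrightarrow> \<sigma> l a' b' \<noteq> 0 \<Longrightarrow> nx a' (fst l) = Some b'"
      by (rule graded_all[OF sg]) (use hc in auto)
    have "mprod (map \<sigma> [(h,1),(inv h,2),(h,3)]) i j = mprod (map \<sigma> [(h,3),(inv h,2),(h,1)]) i j" for i j
    proof -
      have "wt \<sigma> i [(h,1),(inv h,2),(h,3)] = wt \<sigma> i [(h,3),(inv h,2),(h,1)]"
      proof (cases "nx i h")
        case None then show ?thesis by simp
      next
        case (Some b)
        show ?thesis
        proof (cases "nx b (inv h)")
          case None then show ?thesis using Some by simp
        next
          case (Some c)
          then have "c = i" using nx_inv \<open>nx i h = Some b\<close> by blast
          then show ?thesis using Some \<open>nx i h = Some b\<close> by (simp add: mult_ac)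
        qed
      qed
      moreover have e1: "mprod (map \<sigma> [(h,1::nat),(inv h,2),(h,3)]) i j = (if wk i [(h,1::nat),(inv h,2),(h,3)] = Some j then wt \<sigma> i [(h,1::nat),(inv h,2),(h,3)] else 0)"
        by (rule PW) (rule gr)
      moreover have e2: "mprod (map \<sigma> [(h,3::nat),(inv h,2),(h,1)]) i j = (if wk i [(h,3::nat),(inv h,2),(h,1)] = Some j then wt \<sigma> i [(h,3::nat),(inv h,2),(h,1)] else 0)"
        by (rule PW) (rule gr2)
      ultimately show ?thesis by simp
    qed
    then show ?thesis by (simp add: peval_psub_mon mzero_def)
  qed
qed

lemma gen3:
  assumes hc: "h \<in> carrier G" and z: "Bc h = {mzero :: ('f::field,'n) sqmat}"
  shows "mon [(h,1)] \<in> graded_ids G (Bc :: 'g \<Rightarrow> ('f,'n) sqmat set)"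
  unfolding graded_ids_def
proof (intro CollectI conjI allI impI)
  show "is_gpoly G (mon [(h,1)] :: ('g,'f) gpoly)" by (rule gp_mon) (use hc in auto)
  show "peval \<sigma> (mon [(h,1)]) = mzero"
    if sg: "\<forall>h i. h \<in> carrier G \<longrightarrow> \<sigma> (h, i) \<in> Bc h" for \<sigma> :: "'g \<times> nat \<Rightarrow> ('f,'n) sqmat"
  proof -
    have "\<sigma> (h,1) \<in> Bc h" using sg hc by blast
    then have "\<sigma> (h,1) = mzero" using z by blast
    then show ?thesis by (simp add: peval_mon mmul_mid_right)
  qed
qed

lemma MAIN:
  assumes inf: "infinite (UNIV :: 'f::field set)"
    and J: "gJ G gs S (J :: ('g,'f) gpoly set)"
    and Gi: "gJ G gs S (graded_ids G (Bc :: 'g \<Rightarrow> ('f,'n) sqmat set))"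
  shows "p \<in> graded_ids G (Bc :: 'g \<Rightarrow> ('f,'n) sqmat set) \<Longrightarrow> p \<in> J"
proof (induction "card (supp p)" arbitrary: p rule: less_induct)
  case less
  interpret JJ: gJ G gs S J by (rule J)
  interpret GI: gJ G gs S "graded_ids G (Bc :: 'g \<Rightarrow> ('f,'n) sqmat set)" by (rule Gi)
  have gp: "is_gpoly G p" using less.prems by (simp add: graded_ids_def)
  have fp: "finite (supp p)" using gp by (simp add: is_gpoly_def)
  show ?case
  proof (cases "supp p = {}")
    case True
    then have "p = pzero" by (auto simp: supp_def pzero_def fun_eq_iff)
    then show ?thesis using JJ.J_pzero by simp
  next
    case False
    then obtain w where w: "w \<in> supp p" by blast
    have wne: "w \<noteq> []" using w gp by (auto simp: is_gpoly_def supp_def)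
    have wc: "\<forall>v\<in>set w. fst v \<in> carrier G" using w gp by (auto simp: is_gpoly_def)
    show ?thesis
    proof (cases "\<forall>c. wk c w = None")
      case True
      have mJ: "mon w \<in> J" by (rule JJ.L1[OF wne True wc])
      have mG: "mon w \<in> graded_ids G (Bc :: 'g \<Rightarrow> ('f,'n) sqmat set)" by (rule GI.L1[OF wne True wc])
      define p' where "p' = psub p (psmult (p w) (mon w))"
      have p'G: "p' \<in> graded_ids G (Bc :: 'g \<Rightarrow> ('f,'n) sqmat set)" unfolding p'_def by (intro GI.J_psub less.prems GI.J_psmult mG)
      have "supp p' = supp p - {w}" by (auto simp: p'_def supp_def psub_def psmult_def mon_def)
      then have "card (supp p') < card (supp p)" using card_Diff1_less[OF fp w] by simp
      then have p'J: "p' \<in> J" using less.hyps p'G by blast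
      have "p = padd p' (psmult (p w) (mon w))" by (auto simp: p'_def padd_def psub_def psmult_def)
      then show ?thesis using JJ.J_padd[OF p'J JJ.J_psmult[OF mJ, of "p w"]] by simp
    next
      case False
      then obtain a where a: "wk a w \<noteq> None" by blast
      define K where "K = {w'\<in>supp p. wk a w' \<noteq> None \<and> ce a w' = ce a w}"
      have fK: "finite K" using fp by (simp add: K_def)
      have wK: "w \<in> K" using w a by (simp add: K_def)
      have s0: "(\<Sum>w'\<in>K. p w') = 0" unfolding K_def by (rule L3[OF inf less.prems w a])
      define q where "q = (\<lambda>u. \<Sum>w'\<in>K. psmult (p w') (psub (mon w') (mon w)) u)"
      have Kprop: "wk a w' \<noteq> None \<and> ce a w' = ce a w \<and> w' \<noteq> []" if "w' \<in> K" for w'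
        using that gp by (auto simp: K_def is_gpoly_def supp_def)
      have qJ: "q \<in> J" unfolding q_def
        by (rule JJ.J_sum[OF fK]) (use Kprop a in \<open>auto intro!: JJ.J_psmult JJ.L2\<close>)
      have qG: "q \<in> graded_ids G (Bc :: 'g \<Rightarrow> ('f,'n) sqmat set)" unfolding q_def
        by (rule GI.J_sum[OF fK]) (use Kprop a in \<open>auto intro!: GI.J_psmult GI.L2\<close>)
      have qe: "q u = (if u \<in> K then p u else 0)" for u
      proof -
        have "q u = (\<Sum>w'\<in>K. p w' * mon w' u) - (\<Sum>w'\<in>K. p w') * mon w u"
          by (simp add: q_def psmult_def psub_def algebra_simps sum_subtractf sum_distrib_right sum_distrib_left)
        also have "(\<Sum>w'\<in>K. p w' * mon w' u) = (\<Sum>w'\<in>K. if u = w' then p w' else 0)"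
          by (rule sum.cong) (auto simp: mon_def)
        also have "\<dots> = (if u \<in> K then p u else 0)" using fK by simp
        finally show ?thesis using s0 by simp
      qed
      define p' where "p' = psub p q"
      have p'G: "p' \<in> graded_ids G (Bc :: 'g \<Rightarrow> ('f,'n) sqmat set)" unfolding p'_def by (intro GI.J_psub less.prems qG)
      have "supp p' = supp p - K" by (auto simp: p'_def supp_def psub_def qe)
      then have "card (supp p') < card (supp p)" using fp wK w
        by (metis Diff_empty Diff_subset card_seteq empty_iff finite_Diff psubsetI psubset_card_mono
            subset_Diff_insert insert_Diff Diff_iff)
      then have p'J: "p' \<in> J" using less.hyps p'G by blast
      have "p = padd p' q" by (auto simp: p'_def padd_def psub_def)
      then show ?thesis using JJ.J_padd[OF p'J qJ] by simp
    qed
  qed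
qed

end



theorem mainTheorem1:
  fixes G :: "('g, 'b) monoid_scheme"
    and gs :: "'n::finite \<Rightarrow> 'g"
    and S :: "('n \<times> 'n) set"
    and B :: "('f::field, 'n) sqmat set"
  assumes "infinite (UNIV :: 'f set)"
    and "group G"
    and "\<And>i. gs i \<in> carrier G"
    and "inj gs"
    and "B = unit_span S"
    and "is_subalgebra B"
  shows "\<exists>H. finite H \<and>
      (\<forall>hs\<in>H. 2 \<le> length hs \<and> length hs \<le> 2 * card (UNIV :: 'n set) - 1 \<and> set hs \<subseteq> carrier G \<and>
               mlmon hs \<in> graded_ids G (\<lambda>h. B \<inter> elem_comp G gs h)) \<and>
      graded_ids G (\<lambda>h. B \<inter> elem_comp G gs h) =
        TG_generated G
          ((if B \<inter> elem_comp G gs \<one>\<^bsub>G\<^esub> \<noteq> {mzero}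
             then {psub (mon [(\<one>\<^bsub>G\<^esub>, 1), (\<one>\<^bsub>G\<^esub>, 2)]) (mon [(\<one>\<^bsub>G\<^esub>, 2), (\<one>\<^bsub>G\<^esub>, 1)])}
             else {})
           \<union> {psub (mon [(h, 1), (inv\<^bsub>G\<^esub> h, 2), (h, 3)]) (mon [(h, 3), (inv\<^bsub>G\<^esub> h, 2), (h, 1)])
             | h. h \<in> carrier G \<and> h \<noteq> \<one>\<^bsub>G\<^esub> \<and> B \<inter> elem_comp G gs h \<noteq> {mzero}}
           \<union> {mon [(h, 1)] | h. h \<in> carrier G \<and> B \<inter> elem_comp G gs h = {mzero}}
           \<union> mlmon ` H)"
proof -
  note inf = assms(1)
  have Strans: "(a,c) \<in> S" if ab: "(a,b) \<in> S" and bc: "(b,c) \<in> S" for a b c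
  proof -
    define E1 :: "('f,'n) sqmat" where "E1 = (\<lambda>i j. if i = a \<and> j = b then 1 else 0)"
    define E2 :: "('f,'n) sqmat" where "E2 = (\<lambda>i j. if i = b \<and> j = c then 1 else 0)"
    have "E1 \<in> B" "E2 \<in> B" using ab bc by (auto simp: assms(5) unit_span_def E1_def E2_def)
    then have m: "mmul E1 E2 \<in> B" using assms(6) by (auto simp: is_subalgebra_def)
    have "mmul E1 E2 a c = (\<Sum>k\<in>UNIV. E1 a k * E2 k c)" by (simp add: mmul_def)
    also have "\<dots> = E1 a b * E2 b c" by (rule sum_UNIV_single) (simp add: E1_def)
    also have "\<dots> = 1" by (simp add: E1_def E2_def)
    finally have "mmul E1 E2 a c \<noteq> 0" by simp
    then show ?thesis using m by (auto simp: assms(5) unit_span_def)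
  qed
  have gsl: "gset G gs S"
    unfolding gset_def gset_axioms_def using assms(2,3,4) Strans by blast
  interpret gset G gs S by (rule gsl)
  have Bpt: "B \<inter> elem_comp G gs h = (Bc h :: ('f,'n) sqmat set)" for h by (simp add: Bc_def assms(5))
  have Bfun: "(\<lambda>h. B \<inter> elem_comp G gs h) = (Bc :: 'g \<Rightarrow> ('f,'n) sqmat set)" by (simp add: Bpt fun_eq_iff)
  define H where "H = {hs. set hs \<subseteq> Dset \<and> 2 \<le> length hs \<and> length hs \<le> 2 * card (UNIV :: 'n set) - 1 \<and>
      mlmon hs \<in> graded_ids G (Bc :: 'g \<Rightarrow> ('f,'n) sqmat set)}"
  have finH: "finite H"
  proof (rule finite_subset)
    show "H \<subseteq> {xs. set xs \<subseteq> Dset \<and> length xs \<le> 2 * card (UNIV :: 'n set) - 1}" by (auto simp: H_def)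
    show "finite {xs. set xs \<subseteq> Dset \<and> length xs \<le> 2 * card (UNIV :: 'n set) - 1}"
      by (rule finite_lists_length_le[OF finite_Dset])
  qed
  define GS :: "('g, 'f) gpoly set" where "GS = ((if (Bc \<one>\<^bsub>G\<^esub> :: ('f,'n) sqmat set) \<noteq> {mzero}
             then {psub (mon [(\<one>\<^bsub>G\<^esub>, 1), (\<one>\<^bsub>G\<^esub>, 2)]) (mon [(\<one>\<^bsub>G\<^esub>, 2), (\<one>\<^bsub>G\<^esub>, 1)])}
             else {})
           \<union> {psub (mon [(h, 1), (inv\<^bsub>G\<^esub> h, 2), (h, 3)]) (mon [(h, 3), (inv\<^bsub>G\<^esub> h, 2), (h, 1)])
             | h. h \<in> carrier G \<and> h \<noteq> \<one>\<^bsub>G\<^esub> \<and> (Bc h :: ('f,'n) sqmat set) \<noteq> {mzero}}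
           \<union> {mon [(h, 1)] | h. h \<in> carrier G \<and> (Bc h :: ('f,'n) sqmat set) = {mzero}}
           \<union> mlmon ` H)"
  have gensG: "GS \<subseteq> graded_ids G (Bc :: 'g \<Rightarrow> ('f,'n) sqmat set)"
    unfolding GS_def using gen1 gen2 gen3 by (auto simp: H_def)
  have gJ_of: "gJ G gs S J" if TJ: "TG_ideal G J" and SJ: "GS \<subseteq> J" for J :: "('g,'f) gpoly set"
    unfolding gJ_def gJ_axioms_def
  proof (intro conjI gsl TJ allI impI)
    show "psub (mon [(\<one>\<^bsub>G\<^esub>, 1), (\<one>\<^bsub>G\<^esub>, 2)]) (mon [(\<one>\<^bsub>G\<^esub>, 2), (\<one>\<^bsub>G\<^esub>, 1)]) \<in> J" if "(Bc \<one>\<^bsub>G\<^esub> :: ('f,'n) sqmat set) \<noteq> {mzero}"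
      using SJ that by (auto simp: GS_def)
    show "psub (mon [(h, 1), (inv\<^bsub>G\<^esub> h, 2), (h, 3)]) (mon [(h, 3), (inv\<^bsub>G\<^esub> h, 2), (h, 1)]) \<in> J"
      if "h \<in> carrier G" "h \<noteq> \<one>\<^bsub>G\<^esub>" "(Bc h :: ('f,'n) sqmat set) \<noteq> {mzero}" for h
      using SJ that unfolding GS_def by blast
    show "mon [(h, 1)] \<in> J" if "h \<in> carrier G" "(Bc h :: ('f,'n) sqmat set) = {mzero}" for h
      using SJ that unfolding GS_def by blast
    show "mlmon hs \<in> J" if "2 \<le> length hs" "length hs \<le> 2 * card (UNIV :: 'n set) - 1" "set hs \<subseteq> Dset"
        "mlmon hs \<in> graded_ids G (Bc :: 'g \<Rightarrow> ('f,'n) sqmat set)" for hs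
    proof -
      have "hs \<in> H" using that by (simp add: H_def)
      then show ?thesis using SJ unfolding GS_def by blast
    qed
  qed
  have Gi: "gJ G gs S (graded_ids G (Bc :: 'g \<Rightarrow> ('f,'n) sqmat set))"
    by (rule gJ_of[OF TG_graded_ids gensG])
  have eq: "graded_ids G (Bc :: 'g \<Rightarrow> ('f,'n) sqmat set) = TG_generated G GS"
  proof
    show "graded_ids G Bc \<subseteq> TG_generated G GS"
    proof
      fix p assume p: "p \<in> graded_ids G (Bc :: 'g \<Rightarrow> ('f,'n) sqmat set)"
      show "p \<in> TG_generated G GS"
        unfolding TG_generated_def
      proof (rule InterI)
        fix J assume "J \<in> {I. TG_ideal G I \<and> GS \<subseteq> I}"
        then have "gJ G gs S J" using gJ_of by blast
        then show "p \<in> J" using MAIN[OF inf _ Gi p] by blast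
      qed
    qed
    show "TG_generated G GS \<subseteq> graded_ids G Bc"
      unfolding TG_generated_def using TG_graded_ids gensG by blast
  qed
  show ?thesis
  proof (intro exI[of _ H] conjI)
    show "finite H" by (rule finH)
    show "\<forall>hs\<in>H. 2 \<le> length hs \<and> length hs \<le> 2 * card (UNIV :: 'n set) - 1 \<and> set hs \<subseteq> carrier G \<and>
               mlmon hs \<in> graded_ids G (\<lambda>h. B \<inter> elem_comp G gs h)"
      using Dset_carr by (auto simp: H_def Bfun)
    show "graded_ids G (\<lambda>h. B \<inter> elem_comp G gs h) =
        TG_generated G
          ((if B \<inter> elem_comp G gs \<one>\<^bsub>G\<^esub> \<noteq> {mzero}
             then {psub (mon [(\<one>\<^bsub>G\<^esub>, 1), (\<one>\<^bsub>G\<^esub>, 2)]) (mon [(\<one>\<^bsub>G\<^esub>, 2), (\<one>\<^bsub>G\<^esub>, 1)])}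
             else {})
           \<union> {psub (mon [(h, 1), (inv\<^bsub>G\<^esub> h, 2), (h, 3)]) (mon [(h, 3), (inv\<^bsub>G\<^esub> h, 2), (h, 1)])
             | h. h \<in> carrier G \<and> h \<noteq> \<one>\<^bsub>G\<^esub> \<and> B \<inter> elem_comp G gs h \<noteq> {mzero}}
           \<union> {mon [(h, 1)] | h. h \<in> carrier G \<and> B \<inter> elem_comp G gs h = {mzero}}
           \<union> mlmon ` H)"
      unfolding Bfun Bpt using eq by (simp add: GS_def)
  qed
qed


end
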